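(* Assume $(A)$, $(H_1)$, $(\Sigma)$ and fix $x\in\mathbb{R}^d$. Then, $\mathbb{P}$-a.s., $$\mathcal{K}(\underline{\lim}\,h(\cdot,\varphi))\le\underline{\lim}\,\varphi\le\overline{\lim}\,\varphi\le\mathcal{K}(\overline{\lim}\,h(\cdot,\varphi)).$$
   Context: Setting: canonical two-sided Wiener space $(\Omega,\mathcal{F},\mathbb{P})$ with $\Omega=C_0(\mathbb{R},\mathbb{R}^m)$, $W_t(\omega)=\omega(t)$, Wiener shift $\theta_t\omega(\cdot)=\omega(t+\cdot)-\omega(t)$; $T>0$ fixed. SDE on $\mathbb{R}^d$: $dX_t=[AX_t+h(t,X_t)]dt+\sigma(t)dW_t$, with $h(t+T,x)=h(t,x)$, $\sigma(t+T)=\sigma(t)$. $\Phi(t)=e^{tA}$. $\varphi(t,s,\omega)x$ ($s\le t$) denotes the continuous solution flow with $X(s)=x$, satisfying a.s. $\varphi(t,s,\omega)x=\Phi(t-s)x+\int_s^t\Phi(t-r)h(r,\varphi(r,s,\omega)x)dr+\int_s^t\Phi(t-r)\sigma(r)dW_r$. Order on $\mathbb{R}^d$: $x\le y$ iff $y-x\in\mathbb{R}^d_+$; $\inf$/$\sup$ componentwise. Norm $|x|=\max_i|x_i|$, $\|M\|=\max_{i,j}|M_{ij}|$. Assumptions: $(A)$: $a_{ij}\ge0$ for $i\ne j$, there is $\lambda<0$ with $\mathrm{Re}\,\mu\le\lambda$ for every eigenvalue $\mu$ of $A$, and $\|\Phi(t)\|\le e^{\lambda t}$ for $t\ge0$.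 $(H_1)$: $h\in C^1_b(\mathbb{R}\times\mathbb{R}^d,\mathbb{R}^d_+)$, and $h$ is either order-preserving or anti-order-preserving in $x$ for each $t$. $(\Sigma)$: $\sigma_{ij}$ continuous and $\sup_t\max_{i,j}|\sigma_{ij}(t)|<\infty$. Definitions: $a_n^h(t,\omega)=\inf\{h(t,\varphi(t,-mT,\omega)x):m\ge n\}$, $b_n^h(t,\omega)=\sup\{h(t,\varphi(t,-mT,\omega)x):m\ge n\}$ ($m,n\in\mathbb{N}_+$); $[\underline{\lim}\,\varphi](t,\omega)=\lim_{n\to\infty}\inf\{\varphi(t,-mT,\omega)x:m\ge n\}$, $[\overline{\lim}\,\varphi](t,\omega)=\lim_{n\to\infty}\sup\{\varphi(t,-mT,\omega)x:m\ge n\}$, $[\underline{\lim}\,h(\cdot,\varphi)](t,\omega)=\lim_n a_n^h(t,\omega)$, $[\overline{\lim}\,h(\cdot,\varphi)](t,\omega)=\lim_n b_n^h(t,\omega)$. Input-to-state characteristic operator: for a bounded measurable $u:\mathbb{R}\times\Omega\to\mathbb{R}^d_+$, $$[\mathcal{K}(u)](t,\omega)=\int_{-\infty}^t\Phi(t-s)u(s,\omega)\,ds+\int_{-\infty}^t\Phi(t-s)\sigma(s)\,dW_s .$$ *)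

theory Defs
  imports "HOL-Analysis.Analysis" "HOL-Probability.Probability"
begin

primrec mpow :: "real^'n^'n \<Rightarrow> nat \<Rightarrow> real^'n^'n" where
  "mpow A 0 = mat 1"
| "mpow A (Suc k) = A ** mpow A k"

text \<open>Matrix exponential e^A as its power series; Phi(t) = mexp (t *R A).\<close>
definition mexp :: "real^'n^'n \<Rightarrow> real^'n^'n" where
  "mexp A = (\<Sum>k. (1 / fact k :: real) *\<^sub>R mpow A k)"

definition mnorm :: "real^'m^'n \<Rightarrow> real" where
  "mnorm M = Max {\<bar>M $ i $ j\<bar> | i j. True}"

definition cmat :: "real^'n^'n \<Rightarrow> complex^'n^'n" where
  "cmat A = (\<chi> i j. complex_of_real (A $ i $ j))"

definition is_eigenvalue :: "real^'n^'n \<Rightarrow> complex \<Rightarrow> bool" where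
  "is_eigenvalue A \<mu> \<longleftrightarrow> det (mat \<mu> - cmat A) = 0"

definition assumption_A :: "real^'n^'n \<Rightarrow> bool" where
  "assumption_A A \<longleftrightarrow>
     (\<forall>i j. i \<noteq> j \<longrightarrow> A $ i $ j \<ge> 0) \<and>
     (\<exists>lam::real. lam < 0 \<and> (\<forall>\<mu>. is_eigenvalue A \<mu> \<longrightarrow> Re \<mu> \<le> lam) \<and>
        (\<forall>t\<ge>0. mnorm (mexp (t *\<^sub>R A)) \<le> exp (lam * t)))"

definition assumption_H1 :: "(real \<Rightarrow> real^'d \<Rightarrow> real^'d) \<Rightarrow> bool" where
  "assumption_H1 h \<longleftrightarrow>
     (\<exists>D :: real \<times> (real^'d) \<Rightarrow> (real \<times> (real^'d)) \<Rightarrow>\<^sub>L (real^'d).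
        (\<forall>z. ((\<lambda>(t, y). h t y) has_derivative blinfun_apply (D z)) (at z)) \<and>
        continuous_on UNIV D \<and> bounded (range D)) \<and>
     bounded (range (\<lambda>(t, y). h t y)) \<and>
     (\<forall>t y. 0 \<le> h t y) \<and>
     (\<forall>t. (\<forall>y z. y \<le> z \<longrightarrow> h t y \<le> h t z) \<or> (\<forall>y z. y \<le> z \<longrightarrow> h t z \<le> h t y))"

definition assumption_Sigma :: "(real \<Rightarrow> real^'m^'d) \<Rightarrow> bool" where
  "assumption_Sigma \<sigma> \<longleftrightarrow>
     (\<forall>i j. continuous_on UNIV (\<lambda>t. \<sigma> t $ i $ j)) \<and>
     (\<exists>C. \<forall>t i j. \<bar>\<sigma> t $ i $ j\<bar> \<le> C)"

definition two_sided_BM :: "'a measure \<Rightarrow> (real \<Rightarrow> 'a \<Rightarrow> real^'m) \<Rightarrow> bool" where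
  "two_sided_BM M W \<longleftrightarrow>
     prob_space M \<and>
     (\<forall>t. W t \<in> borel_measurable M) \<and>
     (\<forall>\<omega>\<in>space M. W 0 \<omega> = 0 \<and> continuous_on UNIV (\<lambda>t. W t \<omega>)) \<and>
     (\<forall>s t j. s < t \<longrightarrow>
        distributed M lborel (\<lambda>\<omega>. W t \<omega> $ j - W s \<omega> $ j) (normal_density 0 (sqrt (t - s)))) \<and>
     (\<forall>(n::nat) (\<tau>::nat \<Rightarrow> real). (\<forall>k<n. \<tau> k < \<tau> (Suc k)) \<longrightarrow>
        prob_space.indep_vars M (\<lambda>_. borel)
          (\<lambda>(k, j) \<omega>. W (\<tau> (Suc k)) \<omega> $ j - W (\<tau> k) \<omega> $ j) ({..<n} \<times> UNIV))"

definition riemann_ito_sum ::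
  "(real \<Rightarrow> 'a \<Rightarrow> real^'m) \<Rightarrow> (real \<Rightarrow> real^'m^'d) \<Rightarrow> real \<Rightarrow> real \<Rightarrow> nat \<Rightarrow> 'a \<Rightarrow> real^'d" where
  "riemann_ito_sum W f s t n \<omega> =
     (\<Sum>k<n. f (s + real k * (t - s) / real n) *v
        (W (s + real (Suc k) * (t - s) / real n) \<omega> - W (s + real k * (t - s) / real n) \<omega>))"

text \<open>I is (a version of) the Wiener integral int_s^t f(r) dW_r: the limit in probability
  of the Riemann sums (equivalently the L^2-limit, for continuous deterministic f).\<close>
definition wiener_integral ::
  "'a measure \<Rightarrow> (real \<Rightarrow> 'a \<Rightarrow> real^'m) \<Rightarrow> (real \<Rightarrow> real^'m^'d) \<Rightarrow> real \<Rightarrow> real \<Rightarrow> ('a \<Rightarrow> real^'d) \<Rightarrow> bool" where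
  "wiener_integral M W f s t I \<longleftrightarrow>
     I \<in> borel_measurable M \<and>
     (\<forall>\<epsilon>>0. (\<lambda>n. measure M {\<omega>\<in>space M. \<epsilon> < norm (riemann_ito_sum W f s t n \<omega> - I \<omega>)})
               \<longlonglongrightarrow> 0)"

definition wiener_integral_inf ::
  "'a measure \<Rightarrow> (real \<Rightarrow> 'a \<Rightarrow> real^'m) \<Rightarrow> (real \<Rightarrow> real^'m^'d) \<Rightarrow> real \<Rightarrow> ('a \<Rightarrow> real^'d) \<Rightarrow> bool" where
  "wiener_integral_inf M W f t Z \<longleftrightarrow>
     Z \<in> borel_measurable M \<and>
     (\<exists>I. (\<forall>s\<le>t. wiener_integral M W f s t (I s)) \<and>
          (\<forall>\<epsilon>>0. ((\<lambda>s. measure M {\<omega>\<in>space M. \<epsilon> < norm (I s \<omega> - Z \<omega>)}) \<longlongrightarrow> 0) at_bot))"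

text \<open>phi(t,s,omega)x (s <= t) is the continuous solution flow of
  dX = [AX + h(t,X)]dt + sigma(t)dW, X(s) = x: continuous in t on [s,infinity),
  measurable in omega, and a.s. satisfying the variation-of-constants formula.\<close>
definition solution_flow ::
  "'a measure \<Rightarrow> (real \<Rightarrow> 'a \<Rightarrow> real^'m) \<Rightarrow> real^'d^'d \<Rightarrow> (real \<Rightarrow> real^'d \<Rightarrow> real^'d) \<Rightarrow>
   (real \<Rightarrow> real^'m^'d) \<Rightarrow> (real \<Rightarrow> real \<Rightarrow> 'a \<Rightarrow> real^'d \<Rightarrow> real^'d) \<Rightarrow> bool" where
  "solution_flow M W A h \<sigma> \<phi> \<longleftrightarrow>
     (\<forall>s y. \<forall>\<omega>\<in>space M. continuous_on {s..} (\<lambda>t. \<phi> t s \<omega> y)) \<and>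
     (\<forall>t s y. (\<lambda>\<omega>. \<phi> t s \<omega> y) \<in> borel_measurable M) \<and>
     (\<forall>s t y. s \<le> t \<longrightarrow>
        (\<exists>I. wiener_integral M W (\<lambda>r. mexp ((t - r) *\<^sub>R A) ** \<sigma> r) s t I \<and>
             (AE \<omega> in M. \<phi> t s \<omega> y =
                mexp ((t - s) *\<^sub>R A) *v y
                + integral {s..t} (\<lambda>r. mexp ((t - r) *\<^sub>R A) *v h r (\<phi> r s \<omega> y))
                + I \<omega>)))"

text \<open>Componentwise lower and upper limits lim_n inf/sup {phi(t,-mT,omega)x : m >= n}
  (extended-real valued, so no boundedness is presupposed).\<close>
definition liminf_phi ::
  "(real \<Rightarrow> real \<Rightarrow> 'a \<Rightarrow> real^'d \<Rightarrow> real^'d) \<Rightarrow> real \<Rightarrow> real^'d \<Rightarrow> real \<Rightarrow> 'a \<Rightarrow> 'd \<Rightarrow> ereal" where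
  "liminf_phi \<phi> T y t \<omega> i = liminf (\<lambda>m::nat. ereal (\<phi> t (- (real m * T)) \<omega> y $ i))"

definition limsup_phi ::
  "(real \<Rightarrow> real \<Rightarrow> 'a \<Rightarrow> real^'d \<Rightarrow> real^'d) \<Rightarrow> real \<Rightarrow> real^'d \<Rightarrow> real \<Rightarrow> 'a \<Rightarrow> 'd \<Rightarrow> ereal" where
  "limsup_phi \<phi> T y t \<omega> i = limsup (\<lambda>m::nat. ereal (\<phi> t (- (real m * T)) \<omega> y $ i))"

text \<open>[liminf h(.,phi)](t,omega) = lim_n a_n^h(t,omega) and [limsup h(.,phi)](t,omega) = lim_n b_n^h(t,omega)
  (finite, since h is bounded).\<close>
definition liminf_h ::
  "(real \<Rightarrow> real^'d \<Rightarrow> real^'d) \<Rightarrow> (real \<Rightarrow> real \<Rightarrow> 'a \<Rightarrow> real^'d \<Rightarrow> real^'d) \<Rightarrow> real \<Rightarrow> real^'d \<Rightarrow> real \<Rightarrow> 'a \<Rightarrow> real^'d" where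
  "liminf_h h \<phi> T y t \<omega> =
     (\<chi> i. real_of_ereal (liminf (\<lambda>m::nat. ereal (h t (\<phi> t (- (real m * T)) \<omega> y) $ i))))"

definition limsup_h ::
  "(real \<Rightarrow> real^'d \<Rightarrow> real^'d) \<Rightarrow> (real \<Rightarrow> real \<Rightarrow> 'a \<Rightarrow> real^'d \<Rightarrow> real^'d) \<Rightarrow> real \<Rightarrow> real^'d \<Rightarrow> real \<Rightarrow> 'a \<Rightarrow> real^'d" where
  "limsup_h h \<phi> T y t \<omega> =
     (\<chi> i. real_of_ereal (limsup (\<lambda>m::nat. ereal (h t (\<phi> t (- (real m * T)) \<omega> y) $ i))))"

text \<open>Input-to-state characteristic operator:
  [K(u)](t,omega) = int_{-infinity}^t Phi(t-s) u(s,omega) ds + Z(omega), where Z is (a version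
  of) the improper Wiener integral int_{-infinity}^t Phi(t-s) sigma(s) dW_s.\<close>
definition K_op ::
  "real^'d^'d \<Rightarrow> (real \<Rightarrow> 'a \<Rightarrow> real^'d) \<Rightarrow> ('a \<Rightarrow> real^'d) \<Rightarrow> real \<Rightarrow> 'a \<Rightarrow> real^'d" where
  "K_op A u Z t \<omega> = (LINT s:{..t}|lborel. mexp ((t - s) *\<^sub>R A) *v u s \<omega>) + Z \<omega>"

end

theory Submission
  imports Defs "HOL-Real_Asymp.Real_Asymp"
begin

lemma mnorm_ge: "\<bar>M $ i $ j\<bar> \<le> mnorm (M::real^'m^'n)"
proof -
  have fin: "finite {\<bar>M $ i $ j\<bar> | i j. True}"
  proof -
    have "{\<bar>M $ i $ j\<bar> | i j. True} = (\<lambda>(i,j). \<bar>M $ i $ j\<bar>) ` UNIV" by auto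
    then show ?thesis by simp
  qed
  show ?thesis unfolding mnorm_def by (rule Max_ge[OF fin]) blast
qed

lemma mnorm_nonneg: "0 \<le> mnorm (M::real^'m^'n)"
  using mnorm_ge[of M] abs_ge_zero order_trans by blast

lemma mult_entry_bound:
  fixes A B :: "real^'n^'n"
  shows "\<bar>(A ** B) $ i $ j\<bar> \<le> real CARD('n) * mnorm A * mnorm B"
proof -
  have "\<bar>(A ** B) $ i $ j\<bar> = \<bar>\<Sum>k\<in>UNIV. A $ i $ k * B $ k $ j\<bar>"
    by (simp add: matrix_matrix_mult_def)
  also have "\<dots> \<le> (\<Sum>k\<in>UNIV. \<bar>A $ i $ k * B $ k $ j\<bar>)" by (rule sum_abs)
  also have "\<dots> \<le> (\<Sum>k\<in>(UNIV::'n set). mnorm A * mnorm B)"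
    by (rule sum_mono) (auto simp: abs_mult intro!: mult_mono mnorm_ge mnorm_nonneg)
  finally show ?thesis by simp
qed

lemma mpow_entry_bound:
  fixes A :: "real^'n^'n"
  shows "\<bar>mpow A k $ i $ j\<bar> \<le> (real CARD('n) * mnorm A) ^ k"
proof (induction k arbitrary: i j)
  case 0
  then show ?case by (simp add: mat_def)
next
  case (Suc k)
  have "\<bar>mpow A (Suc k) $ i $ j\<bar> = \<bar>\<Sum>l\<in>UNIV. A $ i $ l * mpow A k $ l $ j\<bar>"
    by (simp add: matrix_matrix_mult_def)
  also have "\<dots> \<le> (\<Sum>l\<in>UNIV. \<bar>A $ i $ l * mpow A k $ l $ j\<bar>)" by (rule sum_abs)
  also have "\<dots> \<le> (\<Sum>l\<in>(UNIV::'n set). mnorm A * (real CARD('n) * mnorm A) ^ k)"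
    by (rule sum_mono) (auto simp: abs_mult intro!: mult_mono mnorm_ge mnorm_nonneg Suc)
  finally show ?case by (simp add: algebra_simps)
qed

lemma norm_le_entries: "norm (M::real^'n^'n) \<le> (\<Sum>i\<in>UNIV. \<Sum>j\<in>UNIV. \<bar>M $ i $ j\<bar>)"
proof -
  have "norm M \<le> (\<Sum>i\<in>UNIV. norm (M $ i))" unfolding norm_vec_def by (rule L2_set_le_sum) simp
  also have "\<dots> \<le> (\<Sum>i\<in>UNIV. \<Sum>j\<in>UNIV. \<bar>M $ i $ j\<bar>)"
    by (rule sum_mono) (metis norm_le_l1_cart real_norm_def)
  finally show ?thesis .
qed

lemma summable_mexp: "summable (\<lambda>k. (1 / fact k :: real) *\<^sub>R mpow (A::real^'n^'n) k)"
proof (rule summable_comparison_test)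
  let ?q = "real CARD('n) * mnorm A"
  show "summable (\<lambda>k. real CARD('n) * real CARD('n) * (?q ^ k / fact k))"
    using summable_exp[of ?q] by (intro summable_mult) (simp add: divide_inverse mult.commute)
  show "\<exists>N. \<forall>k\<ge>N. norm ((1 / fact k :: real) *\<^sub>R mpow A k) \<le> real CARD('n) * real CARD('n) * (?q ^ k / fact k)"
  proof (intro exI allI impI)
    fix k :: nat
    have "norm ((1 / fact k :: real) *\<^sub>R mpow A k) \<le> (\<Sum>i\<in>UNIV. \<Sum>j\<in>UNIV. \<bar>((1 / fact k :: real) *\<^sub>R mpow A k) $ i $ j\<bar>)"
      by (rule norm_le_entries)
    also have "\<dots> \<le> (\<Sum>i\<in>(UNIV::'n set). \<Sum>j\<in>(UNIV::'n set). ?q ^ k / fact k)"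
      by (intro sum_mono) (auto simp: abs_mult divide_right_mono mpow_entry_bound)
    finally show "norm ((1 / fact k :: real) *\<^sub>R mpow A k) \<le> real CARD('n) * real CARD('n) * (?q ^ k / fact k)"
      by simp
  qed
qed

lemma mexp_entry: "mexp (A::real^'n^'n) $ i $ j = (\<Sum>k. mpow A k $ i $ j / fact k)"
proof -
  have "(\<lambda>k. ((1 / fact k :: real) *\<^sub>R mpow A k) $ i $ j) sums (mexp A $ i $ j)"
    unfolding mexp_def by (intro sums_vec_nth summable_sums summable_mexp)
  then show ?thesis by (simp add: sums_iff)
qed

lemma summable_entry: "summable (\<lambda>k. mpow (A::real^'n^'n) k $ i $ j / fact k)"
proof -
  have "(\<lambda>k. ((1 / fact k :: real) *\<^sub>R mpow A k) $ i $ j) sums (mexp A $ i $ j)"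
    unfolding mexp_def by (intro sums_vec_nth summable_sums summable_mexp)
  then show ?thesis by (auto simp: sums_iff)
qed

lemma mpow_scale: "mpow (c *\<^sub>R (A::real^'n^'n)) k = c ^ k *\<^sub>R mpow A k"
  by (induction k) (simp_all add: scalar_matrix_assoc matrix_scalar_ac mult.commute)

lemma mexp_scale_entry: "mexp (t *\<^sub>R (A::real^'n^'n)) $ i $ j = (\<Sum>k. (mpow A k $ i $ j / fact k) * t ^ k)"
  by (simp add: mexp_entry mpow_scale mult.commute mult.left_commute divide_inverse)

lemma mexp_cont_entry: "isCont (\<lambda>t. mexp (t *\<^sub>R (A::real^'n^'n)) $ i $ j) t"
proof -
  have "isCont (\<lambda>t. \<Sum>k. (mpow A k $ i $ j / fact k) * t ^ k) t"
  proof (rule isCont_powser_converges_everywhere)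
    fix y :: real
    let ?q = "real CARD('n) * mnorm A"
    show "summable (\<lambda>k. (mpow A k $ i $ j / fact k) * y ^ k)"
    proof (rule summable_comparison_test)
      show "summable (\<lambda>k. inverse (fact k) * (?q * \<bar>y\<bar>) ^ k)" by (rule summable_exp)
      show "\<exists>N. \<forall>k\<ge>N. norm ((mpow A k $ i $ j / fact k) * y ^ k) \<le> inverse (fact k) * (?q * \<bar>y\<bar>) ^ k"
      proof (intro exI allI impI)
        fix k :: nat
        have "\<bar>mpow A k $ i $ j\<bar> * \<bar>y\<bar> ^ k \<le> ?q ^ k * \<bar>y\<bar> ^ k"
          by (intro mult_right_mono mpow_entry_bound) simp
        then show "norm ((mpow A k $ i $ j / fact k) * y ^ k) \<le> inverse (fact k) * (?q * \<bar>y\<bar>) ^ k"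
          by (simp add: abs_mult power_abs power_mult_distrib divide_inverse mult_left_mono mult.commute mult.left_commute)
      qed
    qed
  qed
  then show ?thesis by (simp add: mexp_scale_entry)
qed

lemma mexp_continuous_on: "continuous_on S (\<lambda>t. mexp (t *\<^sub>R (A::real^'n^'n)))"
proof -
  have "continuous_on S (\<lambda>t. mexp (t *\<^sub>R A) $ i)" for i
    by (rule continuous_on_vec_lambda[where f="\<lambda>j t. mexp (t *\<^sub>R A) $ i $ j", simplified])
       (simp add: continuous_at_imp_continuous_on mexp_cont_entry)
  then show ?thesis
    by (rule continuous_on_vec_lambda[where f="\<lambda>i t. mexp (t *\<^sub>R A) $ i", simplified])
qed

lemma binom_step:
  fixes P :: "nat \<Rightarrow> 'v::real_vector" and s :: real
  defines "\<beta> \<equiv> \<lambda>k l. real (k choose l) * s ^ (k - l)"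
  shows "(\<Sum>l\<le>k. \<beta> k l *\<^sub>R P (Suc l)) + (\<Sum>l\<le>k. (s * \<beta> k l) *\<^sub>R P l)
         = (\<Sum>l\<le>Suc k. \<beta> (Suc k) l *\<^sub>R P l)"
proof -
  have g: "(\<Sum>l\<le>k. (s * \<beta> k l) *\<^sub>R P l) = (\<Sum>l\<le>Suc k. (s * \<beta> k l) *\<^sub>R P l)"
    by (simp add: \<beta>_def)
  also have "\<dots> = (s * \<beta> k 0) *\<^sub>R P 0 + (\<Sum>l\<le>k. (s * \<beta> k (Suc l)) *\<^sub>R P (Suc l))"
    by (rule sum.atMost_Suc_shift)
  finally have g2: "(\<Sum>l\<le>k. (s * \<beta> k l) *\<^sub>R P l) = (s * \<beta> k 0) *\<^sub>R P 0 + (\<Sum>l\<le>k. (s * \<beta> k (Suc l)) *\<^sub>R P (Suc l))" .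
  have co: "\<beta> k l + s * \<beta> k (Suc l) = \<beta> (Suc k) (Suc l)" if "l \<le> k" for l
  proof (cases "l = k")
    case True then show ?thesis by (simp add: \<beta>_def)
  next
    case False
    then have "s * s ^ (k - Suc l) = s ^ (k - l)" using that
      by (metis Suc_diff_Suc le_neq_implies_less power_Suc)
    then show ?thesis by (simp add: \<beta>_def algebra_simps)
  qed
  have "(\<Sum>l\<le>Suc k. \<beta> (Suc k) l *\<^sub>R P l) = \<beta> (Suc k) 0 *\<^sub>R P 0 + (\<Sum>l\<le>k. \<beta> (Suc k) (Suc l) *\<^sub>R P (Suc l))"
    by (rule sum.atMost_Suc_shift)
  also have "(\<Sum>l\<le>k. \<beta> (Suc k) (Suc l) *\<^sub>R P (Suc l)) = (\<Sum>l\<le>k. \<beta> k l *\<^sub>R P (Suc l) + (s * \<beta> k (Suc l)) *\<^sub>R P (Suc l))"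
    by (rule sum.cong) (auto simp: co[symmetric] scaleR_add_left)
  moreover have "\<beta> (Suc k) 0 = s * \<beta> k 0" by (simp add: \<beta>_def)
  ultimately show ?thesis
    by (simp add: g2 sum.distrib algebra_simps)
qed

lemma mat_mult_sum:
  fixes A :: "real^'n^'n"
  shows "A ** (\<Sum>l\<in>S. c l *\<^sub>R M l) = (\<Sum>l\<in>S. c l *\<^sub>R (A ** M l))"
proof (induction S rule: infinite_finite_induct)
  case (infinite S) then show ?case by simp
next
  case empty then show ?case by simp
next
  case (insert x F) then show ?case by (simp add: matrix_add_ldistrib matrix_scalar_ac scalar_matrix_assoc[symmetric])
qed

lemma mat_add_rdistrib: "((A::real^'n^'n) + B) ** C = A ** C + B ** C"
  by (simp add: matrix_matrix_mult_def vec_eq_iff algebra_simps sum.distrib)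

lemma mat_scal1: "((s::real) *\<^sub>R mat 1) ** (C::real^'n^'n) = s *\<^sub>R C"
  by (simp add: scalar_matrix_assoc[symmetric])

lemma mpow_binom:
  fixes B :: "real^'n^'n"
  shows "mpow (B + s *\<^sub>R mat 1) k = (\<Sum>l\<le>k. (real (k choose l) * s ^ (k - l)) *\<^sub>R mpow B l)"
proof (induction k)
  case 0 then show ?case by simp
next
  case (Suc k)
  have "mpow (B + s *\<^sub>R mat 1) (Suc k) = (B + s *\<^sub>R mat 1) ** (\<Sum>l\<le>k. (real (k choose l) * s ^ (k - l)) *\<^sub>R mpow B l)"
    by (simp add: Suc)
  also have "\<dots> = (\<Sum>l\<le>k. (real (k choose l) * s ^ (k - l)) *\<^sub>R mpow B (Suc l)) + (\<Sum>l\<le>k. (s * (real (k choose l) * s ^ (k - l))) *\<^sub>R mpow B l)"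
    by (simp add: mat_add_rdistrib mat_scal1 mat_mult_sum sum.distrib scalar_matrix_assoc[symmetric] algebra_simps)
  also have "\<dots> = (\<Sum>l\<le>Suc k. (real (Suc k choose l) * s ^ (Suc k - l)) *\<^sub>R mpow B l)"
    by (rule binom_step)
  finally show ?case .
qed

lemma mpow_nonneg:
  assumes "\<And>i j. 0 \<le> (B::real^'n^'n) $ i $ j"
  shows "0 \<le> mpow B k $ i $ j"
  by (induction k arbitrary: i j) (auto simp: mat_def matrix_matrix_mult_def assms intro!: sum_nonneg)

lemma vec_sum_entry: "(\<Sum>l\<in>S. c l *\<^sub>R (M l::real^'n^'n)) $ i $ j = (\<Sum>l\<in>S. c l * M l $ i $ j)"
  by (induction S rule: infinite_finite_induct) simp_all

lemma summable_abs_entry: "summable (\<lambda>k. norm (mpow (A::real^'n^'n) k $ i $ j / fact k))"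
proof (rule summable_comparison_test)
  let ?q = "real CARD('n) * mnorm A"
  show "summable (\<lambda>k. inverse (fact k) * ?q ^ k)" by (rule summable_exp)
  show "\<exists>N. \<forall>k\<ge>N. norm (norm (mpow A k $ i $ j / fact k)) \<le> inverse (fact k) * ?q ^ k"
  proof (intro exI[of _ 0] allI impI)
    fix k :: nat
    have "inverse (fact k) * \<bar>mpow A k $ i $ j\<bar> \<le> inverse (fact k) * ?q ^ k"
      by (intro mult_left_mono mpow_entry_bound) simp
    then show "norm (norm (mpow A k $ i $ j / fact k)) \<le> inverse (fact k) * ?q ^ k"
      by (simp add: divide_inverse abs_mult mult.commute)
  qed
qed

lemma mexp_nonneg:
  assumes off: "\<And>i j. i \<noteq> j \<Longrightarrow> 0 \<le> (A::real^'n^'n) $ i $ j" and t: "0 \<le> t"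
  shows "0 \<le> mexp (t *\<^sub>R A) $ i $ j"
proof -
  define s where "s = t * mnorm A"
  define B where "B = t *\<^sub>R A + s *\<^sub>R mat 1"
  have Bnn: "0 \<le> B $ i $ j" for i j
  proof (cases "i = j")
    case True
    have "\<bar>A $ i $ i\<bar> \<le> mnorm A" by (rule mnorm_ge)
    then have "t * (- A $ i $ i) \<le> t * mnorm A" using t by (intro mult_left_mono) auto
    then show ?thesis using True by (simp add: B_def s_def mat_def algebra_simps)
  next
    case False
    then show ?thesis using off[OF False] t by (simp add: B_def mat_def)
  qed
  have tA: "t *\<^sub>R A = B + (- s) *\<^sub>R mat 1" by (simp add: B_def)
  define a where "a = (\<lambda>l. mpow B l $ i $ j / fact l)"
  define b where "b = (\<lambda>p. (- s) ^ p / fact p)"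
  have entry: "mpow (t *\<^sub>R A) k $ i $ j / fact k = (\<Sum>l\<le>k. a l * b (k - l))" for k
  proof -
    have "mpow (t *\<^sub>R A) k $ i $ j = (\<Sum>l\<le>k. (real (k choose l) * (- s) ^ (k - l)) * mpow B l $ i $ j)"
      unfolding tA mpow_binom vec_sum_entry ..
    then have "mpow (t *\<^sub>R A) k $ i $ j / fact k = (\<Sum>l\<le>k. (real (k choose l) * (- s) ^ (k - l)) * mpow B l $ i $ j / fact k)"
      by (simp add: sum_divide_distrib)
    also have "\<dots> = (\<Sum>l\<le>k. a l * b (k - l))"
    proof (rule sum.cong)
      fix l assume "l \<in> {..k}"
      then have "fact l * fact (k - l) * (k choose l) = (fact k :: nat)" by (simp add: binomial_fact_lemma)
      then have fk: "(fact k :: real) = fact l * fact (k - l) * real (k choose l)"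
        by (metis of_nat_fact of_nat_mult)
      show "(real (k choose l) * (- s) ^ (k - l)) * mpow B l $ i $ j / fact k = a l * b (k - l)"
        using \<open>l \<in> {..k}\<close> unfolding a_def b_def fk by (simp add: field_simps)
    qed simp
    finally show ?thesis .
  qed
  have sa: "summable (\<lambda>k. norm (a k))" unfolding a_def by (rule summable_abs_entry)
  have sb: "summable (\<lambda>k. norm (b k))" unfolding b_def
    using summable_exp[of "\<bar>s\<bar>"] by (simp add: abs_mult power_abs divide_inverse mult.commute)
  have "mexp (t *\<^sub>R A) $ i $ j = (\<Sum>k. \<Sum>l\<le>k. a l * b (k - l))"
    by (simp add: mexp_entry entry)
  also have "\<dots> = (\<Sum>k. a k) * (\<Sum>k. b k)"
    by (rule Cauchy_product[OF sa sb, symmetric])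
  also have "0 \<le> \<dots>"
  proof (rule mult_nonneg_nonneg)
    show "0 \<le> (\<Sum>k. a k)" unfolding a_def
      by (rule suminf_nonneg) (use summable_entry[of B i j] mpow_nonneg[OF Bnn] in auto)
    have "(\<Sum>k. b k) = exp (- s)" unfolding b_def exp_def
      by (simp add: divide_inverse mult.commute)
    then show "0 \<le> (\<Sum>k. b k)" by simp
  qed
  finally show ?thesis .
qed

definition kappa :: "real \<Rightarrow> real \<Rightarrow> real \<Rightarrow> real \<Rightarrow> real" where
  "kappa a b c d = (\<bar>b - c\<bar> + \<bar>a - d\<bar> - \<bar>b - d\<bar> - \<bar>a - c\<bar>) / 2"

lemma kappa_overlap:
  assumes "a \<le> b" "c \<le> d"
  shows "kappa a b c d = (LINT r|lborel. indicator {a..<b} r * indicator {c..<d} r)"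
proof -
  have "(\<lambda>r. indicator {a..<b} r * indicator {c..<d} r :: real) = indicator ({a..<b} \<inter> {c..<d})"
    by (auto simp: indicator_def fun_eq_iff)
  moreover have "{a..<b} \<inter> {c..<d} = {max a c..<min b d}" by auto
  ultimately have "(LINT r|lborel. indicator {a..<b} r * indicator {c..<d} r) = measure lborel {max a c..<min b d}"
    by simp
  also have "\<dots> = max 0 (min b d - max a c)"
  proof (cases "max a c \<le> min b d")
    case True then show ?thesis by (metis diff_ge_0_iff_ge max.absorb2 measure_lborel_Ico)
  next
    case False
    then have "{max a c..<min b d} = {}" by auto
    then have "measure lborel {max a c..<min b d} = 0" by (simp only:) simp
    then show ?thesis using False by linarith
  qed
  also have "\<dots> = kappa a b c d" using assms unfolding kappa_def by (auto simp: abs_if max_def min_def)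
  finally show ?thesis ..
qed

context
  fixes M :: "'a measure" and W :: "real \<Rightarrow> 'a \<Rightarrow> real^'m"
  assumes BM: "two_sided_BM M W"
begin

lemma ps: "prob_space M" using BM unfolding two_sided_BM_def by blast

lemma W_meas[measurable]: "(\<lambda>\<omega>. W t \<omega> $ j) \<in> borel_measurable M"
  using BM unfolding two_sided_BM_def by (auto intro: measurable_compose[OF _ borel_measurable_nth])

lemma incr_sq_pos:
  assumes "v < u"
  shows "integrable M (\<lambda>\<omega>. (W u \<omega> $ j - W v \<omega> $ j)\<^sup>2) \<and> (LINT \<omega>|M. (W u \<omega> $ j - W v \<omega> $ j)\<^sup>2) = u - v"
proof -
  have D: "distributed M lborel (\<lambda>\<omega>. W u \<omega> $ j - W v \<omega> $ j) (normal_density 0 (sqrt (u - v)))"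
    using BM assms unfolding two_sided_BM_def by blast
  have hb: "has_bochner_integral lborel (\<lambda>x. normal_density 0 (sqrt (u - v)) x * x\<^sup>2) (u - v)"
  proof -
    have "has_bochner_integral lborel (\<lambda>x. normal_density 0 (sqrt (u - v)) x * x\<^sup>2) ((2 * u - 2 * v) / 2)"
      using normal_moment_even[of "sqrt (u - v)" 0 1] assms by (simp add: power2_eq_square)
    moreover have "(2 * u - 2 * v) / 2 = u - v" by simp
    ultimately show ?thesis by simp
  qed
  have "integrable M (\<lambda>\<omega>. (W u \<omega> $ j - W v \<omega> $ j)\<^sup>2)"
    using distributed_integrable[OF D, of "\<lambda>x. x\<^sup>2"] integrable.intros[OF hb] by simp
  moreover have "(LINT \<omega>|M. (W u \<omega> $ j - W v \<omega> $ j)\<^sup>2) = u - v"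
    using distributed_integral[OF D, of "\<lambda>x. x\<^sup>2"] hb by (simp add: has_bochner_integral_integral_eq)
  ultimately show ?thesis by blast
qed

lemma incr_sq:
  "integrable M (\<lambda>\<omega>. (W u \<omega> $ j - W v \<omega> $ j)\<^sup>2) \<and> (LINT \<omega>|M. (W u \<omega> $ j - W v \<omega> $ j)\<^sup>2) = \<bar>u - v\<bar>"
proof (cases u v rule: linorder_cases)
  case less
  have "(\<lambda>\<omega>. (W u \<omega> $ j - W v \<omega> $ j)\<^sup>2) = (\<lambda>\<omega>. (W v \<omega> $ j - W u \<omega> $ j)\<^sup>2)"
    by (simp add: power2_commute)
  then show ?thesis using incr_sq_pos[OF less, of j] less by simp
next
  case equal then show ?thesis by simp
next
  case greater then show ?thesis using incr_sq_pos[OF greater, of j] by simp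
qed

lemma incr_cov:
  "integrable M (\<lambda>\<omega>. (W b \<omega> $ j - W a \<omega> $ j) * (W d \<omega> $ j - W c \<omega> $ j)) \<and>
   (LINT \<omega>|M. (W b \<omega> $ j - W a \<omega> $ j) * (W d \<omega> $ j - W c \<omega> $ j)) = kappa a b c d"
proof -
  let ?D = "\<lambda>u v \<omega>. (W u \<omega> $ j - W v \<omega> $ j)\<^sup>2"
  have eq: "(\<lambda>\<omega>. (W b \<omega> $ j - W a \<omega> $ j) * (W d \<omega> $ j - W c \<omega> $ j))
     = (\<lambda>\<omega>. (?D b c \<omega> + ?D a d \<omega> - ?D b d \<omega> - ?D a c \<omega>) / 2)"
    by (rule ext) (simp add: power2_eq_square algebra_simps)
  have i: "integrable M (?D u v)" for u v using incr_sq[of u j v] by blast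
  have e: "(LINT \<omega>|M. ?D u v \<omega>) = \<bar>u - v\<bar>" for u v using incr_sq[of u j v] by blast
  show ?thesis unfolding eq using i
    by (simp add: e kappa_def)
qed

lemma sum_sq_expect:
  assumes fin: "finite L"
  shows "integrable M (\<lambda>\<omega>. (\<Sum>l\<in>L. c l * (W (b l) \<omega> $ j - W (a l) \<omega> $ j))\<^sup>2) \<and>
    (LINT \<omega>|M. (\<Sum>l\<in>L. c l * (W (b l) \<omega> $ j - W (a l) \<omega> $ j))\<^sup>2)
     = (\<Sum>l\<in>L. \<Sum>l'\<in>L. c l * c l' * kappa (a l) (b l) (a l') (b l'))"
proof -
  let ?X = "\<lambda>l \<omega>. W (b l) \<omega> $ j - W (a l) \<omega> $ j"
  have eq: "(\<lambda>\<omega>. (\<Sum>l\<in>L. c l * ?X l \<omega>)\<^sup>2) = (\<lambda>\<omega>. \<Sum>l\<in>L. \<Sum>l'\<in>L. c l * c l' * (?X l \<omega> * ?X l' \<omega>))"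
    by (rule ext) (simp add: power2_eq_square sum_product algebra_simps)
  have i: "integrable M (\<lambda>\<omega>. ?X l \<omega> * ?X l' \<omega>)" for l l' using incr_cov by blast
  have e: "(LINT \<omega>|M. ?X l \<omega> * ?X l' \<omega>) = kappa (a l) (b l) (a l') (b l')" for l l' using incr_cov by blast
  show ?thesis unfolding eq using i
    by (simp add: e)
qed

end

lemma step_sq_integral:
  assumes fin: "finite L" and le: "\<And>l. l \<in> L \<Longrightarrow> a l \<le> b l"
  shows "integrable lborel (\<lambda>r. (\<Sum>l\<in>L. c l * indicator {a l..<b l} r)\<^sup>2) \<and>
    (LINT r|lborel. (\<Sum>l\<in>L. c l * indicator {a l..<b l} r)\<^sup>2)
     = (\<Sum>l\<in>L. \<Sum>l'\<in>L. c l * c l' * kappa (a l) (b l) (a l') (b l'))"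
proof -
  let ?X = "\<lambda>l r. indicator {a l..<b l} r :: real"
  have eq: "(\<lambda>r. (\<Sum>l\<in>L. c l * ?X l r)\<^sup>2) = (\<lambda>r. \<Sum>l\<in>L. \<Sum>l'\<in>L. c l * c l' * (?X l r * ?X l' r))"
    by (rule ext) (simp add: power2_eq_square sum_product algebra_simps)
  have i: "integrable lborel (\<lambda>r. ?X l r * ?X l' r)" for l l'
  proof -
    have "(\<lambda>r. ?X l r * ?X l' r) = indicator ({a l..<b l} \<inter> {a l'..<b l'})"
      by (auto simp: indicator_def fun_eq_iff)
    moreover have "emeasure lborel ({a l..<b l} \<inter> {a l'..<b l'}) < \<infinity>"
      by (rule le_less_trans[OF emeasure_mono[of _ "{a l..b l}"]]) (auto simp: emeasure_lborel_Icc_eq)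
    ultimately show ?thesis by (simp add: integrable_indicator_iff)
  qed
  have e: "l \<in> L \<Longrightarrow> l' \<in> L \<Longrightarrow> (LINT r|lborel. ?X l r * ?X l' r) = kappa (a l) (b l) (a l') (b l')" for l l'
    using kappa_overlap[OF le le] by simp
  show ?thesis unfolding eq using i fin
    by (simp add: e)
qed

definition pp :: "real \<Rightarrow> real \<Rightarrow> nat \<Rightarrow> nat \<Rightarrow> real" where
  "pp s t n k = s + real k * (t - s) / real n"

lemma pp_ind:
  assumes st: "s < t" and n: "0 < n"
  shows "indicator {pp s t n k..<pp s t n (Suc k)} r =
    (if real k \<le> (r - s) * n / (t - s) \<and> (r - s) * n / (t - s) < real k + 1 then 1 else (0::real))"
proof -
  let ?x = "(r - s) * n / (t - s)"
  have h: "0 < (t - s) / n" using st n by simp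
  define hh where "hh = (t - s) / n"
  have h': "0 < hh" using h by (simp add: hh_def)
  have xh: "r - s = ?x * hh" using st n by (simp add: field_simps hh_def)
  have pk: "pp s t n k = s + real k * hh" for k by (simp add: pp_def hh_def)
  have "pp s t n k \<le> r \<longleftrightarrow> real k * hh \<le> ?x * hh"
    unfolding pk using xh by linarith
  also have "\<dots> \<longleftrightarrow> real k \<le> ?x" by (rule mult_le_cancel_right_pos[OF h'])
  finally have 1: "pp s t n k \<le> r \<longleftrightarrow> real k \<le> ?x" .
  have sk: "real (Suc k) * hh = (real k + 1) * hh" by simp
  have "r < pp s t n (Suc k) \<longleftrightarrow> ?x * hh < (real k + 1) * hh"
    unfolding pk using xh sk by linarith
  also have "\<dots> \<longleftrightarrow> ?x < real k + 1" by (rule mult_less_cancel_right_pos[OF h'])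
  finally have 2: "r < pp s t n (Suc k) \<longleftrightarrow> ?x < real k + 1" .
  show ?thesis using 1 2 by (auto simp: indicator_def)
qed

lemma step_eval:
  fixes c :: "nat \<Rightarrow> real"
  assumes st: "s < t" and n: "0 < n" and r: "s \<le> r" "r < t"
  defines "k0 \<equiv> nat \<lfloor>(r - s) * n / (t - s)\<rfloor>"
  shows "k0 < n" "pp s t n k0 \<le> r" "r < pp s t n (Suc k0)"
    "(\<Sum>k<n. c k * indicator {pp s t n k..<pp s t n (Suc k)} r) = c k0"
proof -
  let ?x = "(r - s) * n / (t - s)"
  have x0: "0 \<le> ?x" using st r n by simp
  have xn: "?x < n" using st r n by (simp add: divide_less_eq)
  have k0: "real k0 \<le> ?x" "?x < real k0 + 1" using x0 unfolding k0_def by linarith+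
  show "k0 < n" using k0 xn by linarith
  have ind: "indicator {pp s t n k..<pp s t n (Suc k)} r = (if k = k0 then 1 else (0::real))" for k
    unfolding pp_ind[OF st n] using k0 by auto
  show "pp s t n k0 \<le> r" "r < pp s t n (Suc k0)" using ind[of k0] by (auto simp: indicator_def split: if_splits)
  show "(\<Sum>k<n. c k * indicator {pp s t n k..<pp s t n (Suc k)} r) = c k0"
  proof -
    have "(\<lambda>k. c k * indicator {pp s t n k..<pp s t n (Suc k)} r) = (\<lambda>k. if k = k0 then c k else 0)"
      by (auto simp: ind)
    then show ?thesis using \<open>k0 < n\<close> by (simp only: sum.delta) simp
  qed
qed

lemma step_zero:
  fixes c :: "nat \<Rightarrow> real"
  assumes st: "s < t" and n: "0 < n" and r: "r < s \<or> t \<le> r"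
  shows "(\<Sum>k<n. c k * indicator {pp s t n k..<pp s t n (Suc k)} r) = 0"
proof -
  let ?x = "(r - s) * n / (t - s)"
  have "?x < 0 \<or> real n \<le> ?x" using st n r by (auto simp: divide_less_0_iff le_divide_eq mult_neg_pos)
  then have "indicator {pp s t n k..<pp s t n (Suc k)} r = (0::real)" if "k < n" for k
    unfolding pp_ind[OF st n] using that by auto
  then show ?thesis by simp
qed

lemma pp_close:
  assumes st: "s < t" and n: "0 < n" and "pp s t n k \<le> r" "r < pp s t n (Suc k)"
  shows "\<bar>pp s t n k - r\<bar> \<le> (t - s) / n" "s \<le> pp s t n k"
proof -
  have "pp s t n (Suc k) = pp s t n k + (t - s) / n" by (simp add: pp_def distrib_right add_divide_distrib)
  then show "\<bar>pp s t n k - r\<bar> \<le> (t - s) / n" using assms by auto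
  show "s \<le> pp s t n k" using st n by (simp add: pp_def)
qed

definition gstep :: "(real \<Rightarrow> real^'m^'d) \<Rightarrow> real \<Rightarrow> real \<Rightarrow> real \<Rightarrow> nat \<Rightarrow> 'd \<Rightarrow> 'm \<Rightarrow> real \<Rightarrow> real" where
  "gstep f s u t n i j r =
     (\<Sum>k<n. f (pp u t n k) $ i $ j * indicator {pp u t n k..<pp u t n (Suc k)} r)
   - (\<Sum>k<n. f (pp s t n k) $ i $ j * indicator {pp s t n k..<pp s t n (Suc k)} r)"

lemma norm_sq_vec: "(norm (v::real^'n))\<^sup>2 = (\<Sum>i\<in>UNIV. (v $ i)\<^sup>2)"
  by (simp add: norm_vec_def L2_set_def sum_nonneg)

lemma mv_meas[measurable]: "g \<in> borel_measurable M \<Longrightarrow> (\<lambda>x. (A::real^'m^'d) *v g x) \<in> borel_measurable M"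
  by (rule measurable_compose[where f=g and g="(*v) A"]) (auto intro: borel_measurable_continuous_onI linear_continuous_on matrix_vector_mul_linear)

lemma riemann_component:
  "riemann_ito_sum W f s t n \<omega> $ i = (\<Sum>k<n. \<Sum>j\<in>UNIV. f (pp s t n k) $ i $ j * (W (pp s t n (Suc k)) \<omega> $ j - W (pp s t n k) \<omega> $ j))"
  by (simp add: riemann_ito_sum_def pp_def matrix_vector_mult_def sum_component)

lemma pp_mono_Suc: "s \<le> t \<Longrightarrow> pp s t n k \<le> pp s t n (Suc k)"
  by (cases "n = 0") (simp_all add: pp_def divide_right_mono mult_right_mono)

lemma riemann_diff_L2:
  fixes W :: "real \<Rightarrow> 'a \<Rightarrow> real^'m" and f :: "real \<Rightarrow> real^'m^'d"
  assumes BM: "two_sided_BM M W" and st: "s \<le> t" and ut: "u \<le> t"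
  shows "integrable M (\<lambda>\<omega>. (norm (riemann_ito_sum W f u t n \<omega> - riemann_ito_sum W f s t n \<omega>))\<^sup>2) \<and>
    (LINT \<omega>|M. (norm (riemann_ito_sum W f u t n \<omega> - riemann_ito_sum W f s t n \<omega>))\<^sup>2)
      \<le> real CARD('m) * (\<Sum>i\<in>UNIV. \<Sum>j\<in>UNIV. LINT r|lborel. (gstep f s u t n i j r)\<^sup>2)"
proof -
  let ?L = "{..<n} <+> {..<n}"
  define aa where "aa = (\<lambda>l. case l of Inl k \<Rightarrow> pp u t n k | Inr k \<Rightarrow> pp s t n k)"
  define bb where "bb = (\<lambda>l. case l of Inl k \<Rightarrow> pp u t n (Suc k) | Inr k \<Rightarrow> pp s t n (Suc k))"
  define cc where "cc = (\<lambda>(i::'d) (j::'m) l. case l of Inl k \<Rightarrow> f (pp u t n k) $ i $ j | Inr k \<Rightarrow> - f (pp s t n k) $ i $ j)"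
  define Y where "Y = (\<lambda>i j \<omega>. \<Sum>l\<in>?L. cc i j l * (W (bb l) \<omega> $ j - W (aa l) \<omega> $ j))"
  have fin: "finite ?L" by simp
  have ab: "l \<in> ?L \<Longrightarrow> aa l \<le> bb l" for l
    using pp_mono_Suc[OF st] pp_mono_Suc[OF ut] by (auto simp: aa_def bb_def split: sum.splits)
  have Dcomp: "(riemann_ito_sum W f u t n \<omega> - riemann_ito_sum W f s t n \<omega>) $ i = (\<Sum>j\<in>UNIV. Y i j \<omega>)" for \<omega> i
    by (simp add: riemann_component Y_def sum.Plus aa_def bb_def cc_def sum_subtractf[symmetric] sum.swap[of _ "{..<n}"]
        sum_negf)
  have g: "(\<Sum>l\<in>?L. cc i j l * indicator {aa l..<bb l} r) = gstep f s u t n i j r" for i j r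
    unfolding gstep_def sum.Plus[OF finite_lessThan finite_lessThan] comp_def aa_def bb_def cc_def
    by (simp add: sum_negf)
  have Yi: "integrable M (\<lambda>\<omega>. (Y i j \<omega>)\<^sup>2)" and Ye: "(LINT \<omega>|M. (Y i j \<omega>)\<^sup>2) = (LINT r|lborel. (gstep f s u t n i j r)\<^sup>2)" for i j
  proof -
    have S: "integrable lborel (\<lambda>r. (\<Sum>l\<in>?L. cc i j l * indicator {aa l..<bb l} r)\<^sup>2) \<and>
      (LINT r|lborel. (\<Sum>l\<in>?L. cc i j l * indicator {aa l..<bb l} r)\<^sup>2)
       = (\<Sum>l\<in>?L. \<Sum>l'\<in>?L. cc i j l * cc i j l' * kappa (aa l) (bb l) (aa l') (bb l'))"
      by (rule step_sq_integral[OF fin]) (rule ab)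
    have E: "integrable M (\<lambda>\<omega>. (Y i j \<omega>)\<^sup>2) \<and> (LINT \<omega>|M. (Y i j \<omega>)\<^sup>2)
       = (\<Sum>l\<in>?L. \<Sum>l'\<in>?L. cc i j l * cc i j l' * kappa (aa l) (bb l) (aa l') (bb l'))"
      unfolding Y_def by (rule sum_sq_expect[OF BM fin])
    show "integrable M (\<lambda>\<omega>. (Y i j \<omega>)\<^sup>2)" using E by blast
    show "(LINT \<omega>|M. (Y i j \<omega>)\<^sup>2) = (LINT r|lborel. (gstep f s u t n i j r)\<^sup>2)"
      using E S unfolding g by simp
  qed
  have Wm[measurable]: "W t' \<in> borel_measurable M" for t' using BM unfolding two_sided_BM_def by blast
  have meas: "(\<lambda>\<omega>. (norm (riemann_ito_sum W f u t n \<omega> - riemann_ito_sum W f s t n \<omega>))\<^sup>2) \<in> borel_measurable M"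
    unfolding riemann_ito_sum_def by measurable
  have bound: "(norm (riemann_ito_sum W f u t n \<omega> - riemann_ito_sum W f s t n \<omega>))\<^sup>2
      \<le> real CARD('m) * (\<Sum>i\<in>UNIV. \<Sum>j\<in>UNIV. (Y i j \<omega>)\<^sup>2)" for \<omega>
  proof -
    have "(norm (riemann_ito_sum W f u t n \<omega> - riemann_ito_sum W f s t n \<omega>))\<^sup>2 = (\<Sum>i\<in>UNIV. (\<Sum>j\<in>UNIV. Y i j \<omega>)\<^sup>2)"
      unfolding norm_sq_vec Dcomp ..
    also have "\<dots> \<le> (\<Sum>i\<in>UNIV. (\<Sum>j\<in>UNIV. (Y i j \<omega>)\<^sup>2) * real CARD('m))"
      by (intro sum_mono) (rule sum_squared_le_sum_of_squares)
    finally show ?thesis by (simp add: sum_distrib_left mult.commute)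
  qed
  have ib: "integrable M (\<lambda>\<omega>. real CARD('m) * (\<Sum>i\<in>UNIV. \<Sum>j\<in>UNIV. (Y i j \<omega>)\<^sup>2))"
    using Yi by auto
  have int: "integrable M (\<lambda>\<omega>. (norm (riemann_ito_sum W f u t n \<omega> - riemann_ito_sum W f s t n \<omega>))\<^sup>2)"
    by (rule Bochner_Integration.integrable_bound[OF ib meas]) (use bound in \<open>auto intro: AE_I2 order_trans[OF _ abs_ge_self]\<close>)
  have "(LINT \<omega>|M. (norm (riemann_ito_sum W f u t n \<omega> - riemann_ito_sum W f s t n \<omega>))\<^sup>2)
     \<le> (LINT \<omega>|M. real CARD('m) * (\<Sum>i\<in>UNIV. \<Sum>j\<in>UNIV. (Y i j \<omega>)\<^sup>2))"
    by (rule integral_mono[OF int ib bound])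
  also have "\<dots> = real CARD('m) * (\<Sum>i\<in>UNIV. \<Sum>j\<in>UNIV. LINT r|lborel. (gstep f s u t n i j r)\<^sup>2)"
    using Yi by (simp add: Ye)
  finally show ?thesis using int by blast
qed

lemma gstep_as_sum:
  "gstep f s u t n i j = (\<lambda>r. \<Sum>l\<in>{..<n} <+> {..<n}.
      (case l of Inl k \<Rightarrow> f (pp u t n k) $ i $ j | Inr k \<Rightarrow> - f (pp s t n k) $ i $ j) *
      indicator {(case l of Inl k \<Rightarrow> pp u t n k | Inr k \<Rightarrow> pp s t n k)..<(case l of Inl k \<Rightarrow> pp u t n (Suc k) | Inr k \<Rightarrow> pp s t n (Suc k))} r)"
  unfolding gstep_def sum.Plus[OF finite_lessThan finite_lessThan] comp_def
  by (simp add: sum_negf fun_eq_iff)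

lemma gstep_integrable:
  assumes "s \<le> t" "u \<le> t"
  shows "integrable lborel (\<lambda>r. (gstep f s u t n i j r)\<^sup>2)"
  unfolding gstep_as_sum
  by (rule conjunct1[OF step_sq_integral]) (use pp_mono_Suc[OF assms(1)] pp_mono_Suc[OF assms(2)] in \<open>auto split: sum.splits\<close>)

lemma gstep_pointwise:
  fixes f :: "real \<Rightarrow> real^'m^'d"
  assumes su: "s < u" and ut: "u < t" and n: "0 < n" and lam: "lam < 0"
    and bnd: "\<And>x. x \<le> t \<Longrightarrow> \<bar>f x $ i $ j\<bar> \<le> C * exp (lam * (t - x))"
    and uc: "\<And>x y. x \<in> {s..t} \<Longrightarrow> y \<in> {s..t} \<Longrightarrow> \<bar>x - y\<bar> \<le> 2 * (t - s) / n \<Longrightarrow> \<bar>f x $ i $ j - f y $ i $ j\<bar> \<le> \<delta>"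
  shows "(gstep f s u t n i j r)\<^sup>2 \<le> indicator {s..u} r * (C\<^sup>2 * exp (2 * lam * (t - r))) + indicator {u..t} r * \<delta>\<^sup>2"
proof -
  have st: "s < t" using su ut by simp
  let ?Q = "\<Sum>k<n. f (pp u t n k) $ i $ j * indicator {pp u t n k..<pp u t n (Suc k)} r"
  let ?P = "\<Sum>k<n. f (pp s t n k) $ i $ j * indicator {pp s t n k..<pp s t n (Suc k)} r"
  have g: "gstep f s u t n i j r = ?Q - ?P" by (simp add: gstep_def)
  consider "r < s \<or> t \<le> r" | "s \<le> r" "r < u" | "u \<le> r" "r < t" by linarith
  then show ?thesis
  proof cases
    case 1
    then have "?Q = 0" "?P = 0" using step_zero[OF ut n] step_zero[OF st n] su by auto
    then show ?thesis by (simp add: g)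
  next
    case 2
    define p where "p = pp s t n (nat \<lfloor>(r - s) * n / (t - s)\<rfloor>)"
    have "?Q = 0" using step_zero[OF ut n] 2 by auto
    moreover have "?P = f p $ i $ j" unfolding p_def by (rule step_eval(4)[OF st n 2(1)]) (use 2 ut in simp)
    moreover have pr: "p \<le> r" unfolding p_def by (rule step_eval(2)[OF st n 2(1)]) (use 2 ut in simp)
    ultimately have "(gstep f s u t n i j r)\<^sup>2 = (f p $ i $ j)\<^sup>2" by (simp add: g)
    also have "\<dots> \<le> (C * exp (lam * (t - p)))\<^sup>2"
    proof -
      have "\<bar>f p $ i $ j\<bar> \<le> C * exp (lam * (t - p))" using bnd[of p] pr 2 ut by auto
      from power_mono[OF this abs_ge_zero, of 2] show ?thesis by simp
    qed
    also have "\<dots> = C\<^sup>2 * exp (2 * lam * (t - p))"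
      by (simp add: power2_eq_square exp_add[symmetric] algebra_simps)
    also have "\<dots> \<le> C\<^sup>2 * exp (2 * lam * (t - r))"
      using pr lam by (intro mult_left_mono) (auto simp: mult_le_cancel_left)
    finally show ?thesis using 2 by (simp add: indicator_def)
  next
    case 3
    define p1 where "p1 = pp u t n (nat \<lfloor>(r - u) * n / (t - u)\<rfloor>)"
    define p2 where "p2 = pp s t n (nat \<lfloor>(r - s) * n / (t - s)\<rfloor>)"
    have r2: "s \<le> r" using 3 su by simp
    have Q: "?Q = f p1 $ i $ j" unfolding p1_def by (rule step_eval(4)[OF ut n 3])
    have P: "?P = f p2 $ i $ j" unfolding p2_def by (rule step_eval(4)[OF st n r2 3(2)])
    have p1: "u \<le> p1" "p1 \<le> r" "\<bar>p1 - r\<bar> \<le> (t - u) / n"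
      using pp_close[OF ut n step_eval(2,3)[OF ut n 3]] step_eval(2)[OF ut n 3] unfolding p1_def by auto
    have p2: "s \<le> p2" "p2 \<le> r" "\<bar>p2 - r\<bar> \<le> (t - s) / n"
      using pp_close[OF st n step_eval(2,3)[OF st n r2 3(2)]] step_eval(2)[OF st n r2 3(2)] unfolding p2_def by auto
    have "(t - u) / n \<le> (t - s) / n" using su n by (simp add: divide_right_mono)
    then have "\<bar>p1 - p2\<bar> \<le> 2 * (t - s) / n" using p1(3) p2(3) by linarith
    then have d: "\<bar>f p1 $ i $ j - f p2 $ i $ j\<bar> \<le> \<delta>" using p1 p2 su 3 by (intro uc) auto
    have "(gstep f s u t n i j r)\<^sup>2 = (f p1 $ i $ j - f p2 $ i $ j)\<^sup>2" by (simp add: g Q P)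
    also have "\<dots> \<le> \<delta>\<^sup>2" using power_mono[OF d abs_ge_zero, of 2] by simp
    finally have A: "(gstep f s u t n i j r)\<^sup>2 \<le> \<delta>\<^sup>2" .
    have B: "0 \<le> indicator {s..u} r * (C\<^sup>2 * exp (2 * lam * (t - r)))" by simp
    have I1: "indicator {u..t} r = (1::real)" using 3 by (simp add: indicator_def)
    show ?thesis unfolding I1 using A B by linarith
  qed
qed



lemma exp_int_bound:
  fixes s u t lam C :: real
  assumes su: "s \<le> u" and lam: "lam < 0"
  shows "integrable lborel (\<lambda>r. indicator {s..u} r * (C\<^sup>2 * exp (2 * lam * (t - r)))) \<and>
    (LINT r|lborel. indicator {s..u} r * (C\<^sup>2 * exp (2 * lam * (t - r)))) \<le> C\<^sup>2 * exp (2 * lam * (t - u)) / (- 2 * lam)"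
proof -
  define F where "F = (\<lambda>r. C\<^sup>2 * exp (2 * lam * (t - r)) / (- 2 * lam))"
  have cont: "continuous_on {s..u} (\<lambda>r. C\<^sup>2 * exp (2 * lam * (t - r)))" by (intro continuous_intros)
  have i: "integrable lborel (\<lambda>r. indicator {s..u} r * (C\<^sup>2 * exp (2 * lam * (t - r))))"
    using borel_integrable_compact[OF compact_Icc cont] by simp
  have der: "(F has_vector_derivative C\<^sup>2 * exp (2 * lam * (t - x))) (at x within {s..u})" for x
  proof -
    have "(F has_real_derivative C\<^sup>2 * (exp (2 * lam * (t - x)) * (- (2 * lam))) / (- 2 * lam)) (at x within {s..u})"
      unfolding F_def using lam by (intro derivative_eq_intros) auto
    then show ?thesis using lam by (simp add: has_real_derivative_iff_has_vector_derivative[symmetric])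
  qed
  have "(LINT r|lborel. indicator {s..u} r * (C\<^sup>2 * exp (2 * lam * (t - r)))) = F u - F s"
    using integral_FTC_Icc[OF su der cont] by simp
  also have "\<dots> \<le> F u"
  proof -
    have "0 \<le> C\<^sup>2 * exp (2 * lam * (t - s))" by simp
    then have "0 \<le> F s" unfolding F_def using lam by (intro divide_nonneg_pos) auto
    then show ?thesis by simp
  qed
  finally show ?thesis using i by (simp add: F_def)
qed

lemma gstep_int_bound:
  fixes f :: "real \<Rightarrow> real^'m^'d"
  assumes su: "s < u" and ut: "u < t" and n: "0 < n" and lam: "lam < 0"
    and bnd: "\<And>x. x \<le> t \<Longrightarrow> \<bar>f x $ i $ j\<bar> \<le> C * exp (lam * (t - x))"
    and uc: "\<And>x y. x \<in> {s..t} \<Longrightarrow> y \<in> {s..t} \<Longrightarrow> \<bar>x - y\<bar> \<le> 2 * (t - s) / n \<Longrightarrow> \<bar>f x $ i $ j - f y $ i $ j\<bar> \<le> \<delta>"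
  shows "(LINT r|lborel. (gstep f s u t n i j r)\<^sup>2) \<le> C\<^sup>2 * exp (2 * lam * (t - u)) / (- 2 * lam) + (t - u) * \<delta>\<^sup>2"
proof -
  have e: "integrable lborel (\<lambda>r. indicator {s..u} r * (C\<^sup>2 * exp (2 * lam * (t - r))))"
     "(LINT r|lborel. indicator {s..u} r * (C\<^sup>2 * exp (2 * lam * (t - r)))) \<le> C\<^sup>2 * exp (2 * lam * (t - u)) / (- 2 * lam)"
    using exp_int_bound[of s u lam C t] su lam by auto
  have i2: "integrable lborel (\<lambda>r. indicator {u..t} r * \<delta>\<^sup>2 :: real)"
    by (intro integrable_mult_left) (simp add: emeasure_lborel_Icc_eq)
  have v2: "(LINT r|lborel. indicator {u..t} r * \<delta>\<^sup>2) = (t - u) * \<delta>\<^sup>2"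
    using ut by simp
  have "(LINT r|lborel. (gstep f s u t n i j r)\<^sup>2) \<le>
     (LINT r|lborel. indicator {s..u} r * (C\<^sup>2 * exp (2 * lam * (t - r))) + indicator {u..t} r * \<delta>\<^sup>2)"
    by (rule integral_mono[OF gstep_integrable Bochner_Integration.integrable_add[OF e(1) i2]])
       (use su ut gstep_pointwise[OF su ut n lam bnd uc] in auto)
  also have "\<dots> = (LINT r|lborel. indicator {s..u} r * (C\<^sup>2 * exp (2 * lam * (t - r)))) + (t - u) * \<delta>\<^sup>2"
    using e(1) i2 v2 by simp
  finally show ?thesis using e(2) by linarith
qed

lemma norm4: "norm (a + b + c + d) \<le> norm a + norm b + norm c + norm (d::'v::real_normed_vector)"
proof -
  have "norm (a + b + c + d) \<le> norm (a + b + c) + norm d" by (rule norm_triangle_ineq)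
  moreover have "norm (a + b + c) \<le> norm (a + b) + norm c" by (rule norm_triangle_ineq)
  moreover have "norm (a + b) \<le> norm a + norm b" by (rule norm_triangle_ineq)
  ultimately show ?thesis by linarith
qed

lemma prob_bound:
  fixes W :: "real \<Rightarrow> 'a \<Rightarrow> real^'m" and f :: "real \<Rightarrow> real^'m^'d"
  assumes BM: "two_sided_BM M W" and eps: "0 < \<epsilon>" and ut: "u \<le> t"
    and J: "wiener_integral M W f u t J"
    and Z: "wiener_integral_inf M W f t Z"
    and L2: "\<And>s \<eta>. s < u \<Longrightarrow> 0 < \<eta> \<Longrightarrow> eventually (\<lambda>n. (LINT \<omega>|M. (norm (riemann_ito_sum W f u t n \<omega> - riemann_ito_sum W f s t n \<omega>))\<^sup>2) \<le> B + \<eta>) sequentially"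
  shows "measure M {\<omega>\<in>space M. 4 * \<epsilon> < norm (J \<omega> - Z \<omega>)} \<le> B / \<epsilon>\<^sup>2"
proof -
  interpret prob_space M using BM unfolding two_sided_BM_def by blast
  have Wm[measurable]: "W t' \<in> borel_measurable M" for t' using BM unfolding two_sided_BM_def by blast
  have Rm[measurable]: "riemann_ito_sum W f a b n \<in> borel_measurable M" for a b n
    unfolding riemann_ito_sum_def by measurable
  have Jm[measurable]: "J \<in> borel_measurable M" using J unfolding wiener_integral_def by blast
  have Zm[measurable]: "Z \<in> borel_measurable M" using Z unfolding wiener_integral_inf_def by blast
  obtain I where I: "\<And>s. s \<le> t \<Longrightarrow> wiener_integral M W f s t (I s)"
    and Ilim: "\<And>e. 0 < e \<Longrightarrow> ((\<lambda>s. measure M {\<omega>\<in>space M. e < norm (I s \<omega> - Z \<omega>)}) \<longlongrightarrow> 0) at_bot"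
    using Z unfolding wiener_integral_inf_def by blast
  show ?thesis
  proof (rule field_le_epsilon)
    fix \<eta> :: real assume eta: "0 < \<eta>"
    have "eventually (\<lambda>s. measure M {\<omega>\<in>space M. \<epsilon> < norm (I s \<omega> - Z \<omega>)} < \<eta> / 4) at_bot"
      using Ilim[OF eps] eta by (intro order_tendstoD) auto
    then obtain b where b: "\<And>s. s \<le> b \<Longrightarrow> measure M {\<omega>\<in>space M. \<epsilon> < norm (I s \<omega> - Z \<omega>)} < \<eta> / 4"
      by (auto simp: eventually_at_bot_linorder)
    define s where "s = min b (u - 1)"
    have su: "s < u" "s \<le> t" "s \<le> b" using ut by (auto simp: s_def)
    have Ism[measurable]: "I s \<in> borel_measurable M" using I[OF su(2)] unfolding wiener_integral_def by blast
    have e1: "eventually (\<lambda>n. measure M {\<omega>\<in>space M. \<epsilon> < norm (riemann_ito_sum W f u t n \<omega> - J \<omega>)} < \<eta> / 4) sequentially"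
      using J eps eta unfolding wiener_integral_def by (intro order_tendstoD) auto
    have e3: "eventually (\<lambda>n. measure M {\<omega>\<in>space M. \<epsilon> < norm (riemann_ito_sum W f s t n \<omega> - I s \<omega>)} < \<eta> / 4) sequentially"
      using I[OF su(2)] eps eta unfolding wiener_integral_def by (intro order_tendstoD) auto
    have e2: "eventually (\<lambda>n. (LINT \<omega>|M. (norm (riemann_ito_sum W f u t n \<omega> - riemann_ito_sum W f s t n \<omega>))\<^sup>2) \<le> B + \<eta> * \<epsilon>\<^sup>2 / 4) sequentially"
      using eps eta by (intro L2 su) auto
    obtain n where n1: "measure M {\<omega>\<in>space M. \<epsilon> < norm (riemann_ito_sum W f u t n \<omega> - J \<omega>)} < \<eta> / 4"
      and n3: "measure M {\<omega>\<in>space M. \<epsilon> < norm (riemann_ito_sum W f s t n \<omega> - I s \<omega>)} < \<eta> / 4"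
      and n2: "(LINT \<omega>|M. (norm (riemann_ito_sum W f u t n \<omega> - riemann_ito_sum W f s t n \<omega>))\<^sup>2) \<le> B + \<eta> * \<epsilon>\<^sup>2 / 4"
      using eventually_happens'[OF _ eventually_conj[OF e1 eventually_conj[OF e2 e3]]] by auto
    let ?D = "\<lambda>\<omega>. riemann_ito_sum W f u t n \<omega> - riemann_ito_sum W f s t n \<omega>"
    have m2: "measure M {\<omega>\<in>space M. \<epsilon> < norm (?D \<omega>)} \<le> (B + \<eta> * \<epsilon>\<^sup>2 / 4) / \<epsilon>\<^sup>2"
    proof -
      have "measure M {\<omega>\<in>space M. \<epsilon> < norm (?D \<omega>)} \<le> measure M {\<omega>\<in>space M. \<epsilon>\<^sup>2 \<le> (norm (?D \<omega>))\<^sup>2}"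
        using eps by (intro finite_measure_mono) (auto intro: power_mono)
      also have "\<dots> \<le> (LINT \<omega>|M. (norm (?D \<omega>))\<^sup>2) / \<epsilon>\<^sup>2"
      proof (rule integral_Markov_inequality_measure[where A="space M"])
        show "integrable M (\<lambda>\<omega>. (norm (?D \<omega>))\<^sup>2)"
          using riemann_diff_L2[OF BM su(2) ut, of f n] by blast
      qed (use eps in simp_all)
      also have "\<dots> \<le> (B + \<eta> * \<epsilon>\<^sup>2 / 4) / \<epsilon>\<^sup>2"
        using n2 eps by (intro divide_right_mono) auto
      finally show ?thesis .
    qed
    have sub: "{\<omega>\<in>space M. 4 * \<epsilon> < norm (J \<omega> - Z \<omega>)} \<subseteq>
       ({\<omega>\<in>space M. \<epsilon> < norm (riemann_ito_sum W f u t n \<omega> - J \<omega>)} \<union> {\<omega>\<in>space M. \<epsilon> < norm (?D \<omega>)}) \<union>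
       ({\<omega>\<in>space M. \<epsilon> < norm (riemann_ito_sum W f s t n \<omega> - I s \<omega>)} \<union> {\<omega>\<in>space M. \<epsilon> < norm (I s \<omega> - Z \<omega>)})"
    proof (intro subsetI)
      fix \<omega> assume \<omega>: "\<omega> \<in> {\<omega>\<in>space M. 4 * \<epsilon> < norm (J \<omega> - Z \<omega>)}"
      have "J \<omega> - Z \<omega> = - (riemann_ito_sum W f u t n \<omega> - J \<omega>) + ?D \<omega> + (riemann_ito_sum W f s t n \<omega> - I s \<omega>) + (I s \<omega> - Z \<omega>)"
        by (simp add: algebra_simps)
      then have "norm (J \<omega> - Z \<omega>) \<le> norm (- (riemann_ito_sum W f u t n \<omega> - J \<omega>)) + norm (?D \<omega>) + norm (riemann_ito_sum W f s t n \<omega> - I s \<omega>) + norm (I s \<omega> - Z \<omega>)"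
        by (metis norm4)
      then have tri: "norm (J \<omega> - Z \<omega>) \<le> norm (riemann_ito_sum W f u t n \<omega> - J \<omega>) + norm (?D \<omega>) + norm (riemann_ito_sum W f s t n \<omega> - I s \<omega>) + norm (I s \<omega> - Z \<omega>)"
        by (simp only: norm_minus_cancel)
      show "\<omega> \<in> ({\<omega>\<in>space M. \<epsilon> < norm (riemann_ito_sum W f u t n \<omega> - J \<omega>)} \<union> {\<omega>\<in>space M. \<epsilon> < norm (?D \<omega>)}) \<union>
       ({\<omega>\<in>space M. \<epsilon> < norm (riemann_ito_sum W f s t n \<omega> - I s \<omega>)} \<union> {\<omega>\<in>space M. \<epsilon> < norm (I s \<omega> - Z \<omega>)})"
      proof (rule ccontr)
        assume "\<not> ?thesis"
        then have "norm (riemann_ito_sum W f u t n \<omega> - J \<omega>) \<le> \<epsilon>" "norm (?D \<omega>) \<le> \<epsilon>"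
          "norm (riemann_ito_sum W f s t n \<omega> - I s \<omega>) \<le> \<epsilon>" "norm (I s \<omega> - Z \<omega>) \<le> \<epsilon>"
          using \<omega> by auto
        then show False using tri \<omega> by simp
      qed
    qed
    have "measure M {\<omega>\<in>space M. 4 * \<epsilon> < norm (J \<omega> - Z \<omega>)} \<le>
       measure M (({\<omega>\<in>space M. \<epsilon> < norm (riemann_ito_sum W f u t n \<omega> - J \<omega>)} \<union> {\<omega>\<in>space M. \<epsilon> < norm (?D \<omega>)}) \<union>
       ({\<omega>\<in>space M. \<epsilon> < norm (riemann_ito_sum W f s t n \<omega> - I s \<omega>)} \<union> {\<omega>\<in>space M. \<epsilon> < norm (I s \<omega> - Z \<omega>)}))"
      by (rule finite_measure_mono[OF sub]) measurable
    also have "\<dots> \<le> (measure M {\<omega>\<in>space M. \<epsilon> < norm (riemann_ito_sum W f u t n \<omega> - J \<omega>)} + measure M {\<omega>\<in>space M. \<epsilon> < norm (?D \<omega>)}) +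
       (measure M {\<omega>\<in>space M. \<epsilon> < norm (riemann_ito_sum W f s t n \<omega> - I s \<omega>)} + measure M {\<omega>\<in>space M. \<epsilon> < norm (I s \<omega> - Z \<omega>)})"
      by (intro order_trans[OF measure_Un_le] add_mono measure_Un_le) measurable
    also have "\<dots> \<le> (\<eta> / 4 + (B + \<eta> * \<epsilon>\<^sup>2 / 4) / \<epsilon>\<^sup>2) + (\<eta> / 4 + \<eta> / 4)"
      using n1 m2 n3 b[OF su(3)] by linarith
    also have "\<dots> \<le> B / \<epsilon>\<^sup>2 + \<eta>"
      using eps by (simp add: field_simps)
    finally show "measure M {\<omega>\<in>space M. 4 * \<epsilon> < norm (J \<omega> - Z \<omega>)} \<le> B / \<epsilon>\<^sup>2 + \<eta>" .
  qed
qed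

lemma entry_le_norm: "\<bar>(M::real^'m^'d) $ i $ j\<bar> \<le> norm M"
  by (rule order_trans[OF component_le_norm_cart Finite_Cartesian_Product.norm_nth_le])

lemma f_entry_bound:
  fixes A :: "real^'d^'d" and \<sigma> :: "real \<Rightarrow> real^'m^'d"
  assumes Phi: "\<And>\<tau>. 0 \<le> \<tau> \<Longrightarrow> mnorm (mexp (\<tau> *\<^sub>R A)) \<le> exp (lam * \<tau>)"
    and sb: "\<And>r i j. \<bar>\<sigma> r $ i $ j\<bar> \<le> Cs" and x: "x \<le> t"
  shows "\<bar>(mexp ((t - x) *\<^sub>R A) ** \<sigma> x) $ i $ j\<bar> \<le> (real CARD('d) * Cs) * exp (lam * (t - x))"
proof -
  have "\<bar>(mexp ((t - x) *\<^sub>R A) ** \<sigma> x) $ i $ j\<bar> = \<bar>\<Sum>k\<in>UNIV. mexp ((t - x) *\<^sub>R A) $ i $ k * \<sigma> x $ k $ j\<bar>"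
    by (simp add: matrix_matrix_mult_def)
  also have "\<dots> \<le> (\<Sum>k\<in>UNIV. \<bar>mexp ((t - x) *\<^sub>R A) $ i $ k * \<sigma> x $ k $ j\<bar>)" by (rule sum_abs)
  also have "\<dots> \<le> (\<Sum>k\<in>(UNIV::'d set). exp (lam * (t - x)) * Cs)"
  proof (rule sum_mono)
    fix k
    have "\<bar>mexp ((t - x) *\<^sub>R A) $ i $ k\<bar> \<le> exp (lam * (t - x))"
      using mnorm_ge[of "mexp ((t - x) *\<^sub>R A)" i k] Phi[of "t - x"] x by simp
    then show "\<bar>mexp ((t - x) *\<^sub>R A) $ i $ k * \<sigma> x $ k $ j\<bar> \<le> exp (lam * (t - x)) * Cs"
    proof -
      have "\<bar>\<sigma> x $ k $ j\<bar> \<le> Cs" by (rule sb)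
      then show ?thesis using \<open>\<bar>mexp ((t - x) *\<^sub>R A) $ i $ k\<bar> \<le> exp (lam * (t - x))\<close>
        unfolding abs_mult by (intro mult_mono) auto
    qed
  qed
  finally show ?thesis by (simp add: algebra_simps)
qed

lemma f_continuous:
  fixes A :: "real^'d^'d" and \<sigma> :: "real \<Rightarrow> real^'m^'d"
  assumes sc: "\<And>i j. continuous_on UNIV (\<lambda>r. \<sigma> r $ i $ j)"
  shows "continuous_on S (\<lambda>r. mexp ((t - r) *\<^sub>R A) ** \<sigma> r)"
proof -
  have e: "continuous_on S (\<lambda>r. (mexp ((t - r) *\<^sub>R A) ** \<sigma> r) $ i $ j)" for i j
  proof -
    have c1: "continuous_on S (\<lambda>r. mexp ((t - r) *\<^sub>R A) $ i $ k)" for k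
    proof -
      have "continuous_on S ((\<lambda>\<tau>. mexp (\<tau> *\<^sub>R A) $ i $ k) \<circ> (\<lambda>r. t - r))"
        by (intro continuous_on_compose continuous_intros) (simp add: continuous_at_imp_continuous_on mexp_cont_entry mexp_continuous_on)
      then show ?thesis by (simp add: comp_def)
    qed
    have c2: "continuous_on S (\<lambda>r. \<sigma> r $ k $ j)" for k using sc continuous_on_subset by blast
    have eq: "(\<lambda>r. (mexp ((t - r) *\<^sub>R A) ** \<sigma> r) $ i $ j) = (\<lambda>r. \<Sum>k\<in>UNIV. mexp ((t - r) *\<^sub>R A) $ i $ k * \<sigma> r $ k $ j)"
      by (simp add: matrix_matrix_mult_def)
    show ?thesis unfolding eq
      by (intro continuous_on_sum continuous_on_mult c1 c2)
  qed
  have "continuous_on S (\<lambda>r. (mexp ((t - r) *\<^sub>R A) ** \<sigma> r) $ i)" for i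
    by (rule continuous_on_vec_lambda[where f="\<lambda>j r. (mexp ((t - r) *\<^sub>R A) ** \<sigma> r) $ i $ j", simplified]) (rule e)
  then show ?thesis
    by (rule continuous_on_vec_lambda[where f="\<lambda>i r. (mexp ((t - r) *\<^sub>R A) ** \<sigma> r) $ i", simplified])
qed

lemma L2_specific:
  fixes A :: "real^'d^'d" and \<sigma> :: "real \<Rightarrow> real^'m^'d" and W :: "real \<Rightarrow> 'a \<Rightarrow> real^'m"
  assumes BM: "two_sided_BM M W" and lam: "lam < 0"
    and Phi: "\<And>\<tau>. 0 \<le> \<tau> \<Longrightarrow> mnorm (mexp (\<tau> *\<^sub>R A)) \<le> exp (lam * \<tau>)"
    and sc: "\<And>i j. continuous_on UNIV (\<lambda>r. \<sigma> r $ i $ j)"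
    and sb: "\<And>r i j. \<bar>\<sigma> r $ i $ j\<bar> \<le> Cs"
    and su: "s < u" and ut: "u < t" and eta: "0 < \<eta>"
  shows "eventually (\<lambda>n. (LINT \<omega>|M. (norm (riemann_ito_sum W (\<lambda>r. mexp ((t - r) *\<^sub>R A) ** \<sigma> r) u t n \<omega>
              - riemann_ito_sum W (\<lambda>r. mexp ((t - r) *\<^sub>R A) ** \<sigma> r) s t n \<omega>))\<^sup>2)
     \<le> real CARD('m) * real CARD('d) * real CARD('m) * (real CARD('d) * Cs)\<^sup>2 / (- 2 * lam) * exp (2 * lam * (t - u)) + \<eta>) sequentially"
proof -
  define f where "f = (\<lambda>r. mexp ((t - r) *\<^sub>R A) ** \<sigma> r)"
  define N where "N = real CARD('m) * real CARD('d) * real CARD('m)"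
  define Cf where "Cf = real CARD('d) * Cs"
  have N: "0 < N" by (simp add: N_def)
  define \<delta> where "\<delta> = sqrt (\<eta> / (N * (t - u)))"
  have d: "0 < \<delta>" using eta N ut by (simp add: \<delta>_def)
  have d2: "N * ((t - u) * \<delta>\<^sup>2) = \<eta>" using eta N ut by (simp add: \<delta>_def)
  have "uniformly_continuous_on {s..t} f"
    unfolding f_def by (rule compact_uniformly_continuous[OF f_continuous[OF sc] compact_Icc])
  then obtain \<rho> where rho: "0 < \<rho>" and uc: "\<And>x y. x \<in> {s..t} \<Longrightarrow> y \<in> {s..t} \<Longrightarrow> dist y x < \<rho> \<Longrightarrow> dist (f y) (f x) < \<delta>"
    unfolding uniformly_continuous_on_def using d by metis
  have ev: "eventually (\<lambda>n::nat. 0 < n \<and> 2 * (t - s) / real n < \<rho>) sequentially"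
  proof -
    have "((\<lambda>n::nat. 2 * (t - s) / real n) \<longlongrightarrow> 0) sequentially"
      by real_asymp
    then have "eventually (\<lambda>n::nat. 2 * (t - s) / real n < \<rho>) sequentially"
      using rho by (intro order_tendstoD) auto
    moreover have "eventually (\<lambda>n::nat. 0 < n) sequentially" by (rule eventually_gt_at_top)
    ultimately show ?thesis by eventually_elim auto
  qed
  show ?thesis
  proof (rule eventually_mono[OF ev], safe)
    fix n :: nat assume n: "0 < n" and nr: "2 * (t - s) / real n < \<rho>"
    have bnd: "\<And>x. x \<le> t \<Longrightarrow> \<bar>f x $ i $ j\<bar> \<le> Cf * exp (lam * (t - x))" for i j
      unfolding f_def Cf_def by (rule f_entry_bound[OF Phi sb])
    have ucij: "\<And>x y. x \<in> {s..t} \<Longrightarrow> y \<in> {s..t} \<Longrightarrow> \<bar>x - y\<bar> \<le> 2 * (t - s) / n \<Longrightarrow> \<bar>f x $ i $ j - f y $ i $ j\<bar> \<le> \<delta>" for i j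
    proof -
      fix x y assume xy: "x \<in> {s..t}" "y \<in> {s..t}" "\<bar>x - y\<bar> \<le> 2 * (t - s) / n"
      then have "dist x y < \<rho>" using nr by (simp add: dist_real_def)
      then have "dist (f x) (f y) < \<delta>" using uc xy by blast
      moreover have "\<bar>f x $ i $ j - f y $ i $ j\<bar> \<le> norm (f x - f y)"
        using entry_le_norm[of "f x - f y" i j] by simp
      ultimately show "\<bar>f x $ i $ j - f y $ i $ j\<bar> \<le> \<delta>" by (simp add: dist_norm)
    qed
    have gi: "(LINT r|lborel. (gstep f s u t n i j r)\<^sup>2) \<le> Cf\<^sup>2 * exp (2 * lam * (t - u)) / (- 2 * lam) + (t - u) * \<delta>\<^sup>2" for i j
      by (rule gstep_int_bound[OF su ut n lam bnd ucij])
    have "(LINT \<omega>|M. (norm (riemann_ito_sum W f u t n \<omega> - riemann_ito_sum W f s t n \<omega>))\<^sup>2)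
        \<le> real CARD('m) * (\<Sum>i\<in>UNIV. \<Sum>j\<in>UNIV. LINT r|lborel. (gstep f s u t n i j r)\<^sup>2)"
      using riemann_diff_L2[OF BM _ ut[THEN less_imp_le], of s f n] su ut by auto
    also have "\<dots> \<le> real CARD('m) * (\<Sum>i\<in>(UNIV::'d set). \<Sum>j\<in>(UNIV::'m set). Cf\<^sup>2 * exp (2 * lam * (t - u)) / (- 2 * lam) + (t - u) * \<delta>\<^sup>2)"
      by (intro mult_left_mono sum_mono gi) auto
    also have "\<dots> = N * (Cf\<^sup>2 * exp (2 * lam * (t - u)) / (- 2 * lam)) + N * ((t - u) * \<delta>\<^sup>2)"
      by (simp add: N_def algebra_simps)
    also have "\<dots> = N * Cf\<^sup>2 / (- 2 * lam) * exp (2 * lam * (t - u)) + \<eta>"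
      using d2 by simp
    finally show "(LINT \<omega>|M. (norm (riemann_ito_sum W (\<lambda>r. mexp ((t - r) *\<^sub>R A) ** \<sigma> r) u t n \<omega>
              - riemann_ito_sum W (\<lambda>r. mexp ((t - r) *\<^sub>R A) ** \<sigma> r) s t n \<omega>))\<^sup>2)
     \<le> real CARD('m) * real CARD('d) * real CARD('m) * (real CARD('d) * Cs)\<^sup>2 / (- 2 * lam) * exp (2 * lam * (t - u)) + \<eta>"
      by (simp add: f_def N_def Cf_def)
  qed
qed

lemma as_conv:
  fixes A :: "real^'d^'d" and \<sigma> :: "real \<Rightarrow> real^'m^'d" and W :: "real \<Rightarrow> 'a \<Rightarrow> real^'m"
    and J :: "nat \<Rightarrow> 'a \<Rightarrow> real^'d"
  assumes BM: "two_sided_BM M W" and lam: "lam < 0"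
    and Phi: "\<And>\<tau>. 0 \<le> \<tau> \<Longrightarrow> mnorm (mexp (\<tau> *\<^sub>R A)) \<le> exp (lam * \<tau>)"
    and sc: "\<And>i j. continuous_on UNIV (\<lambda>r. \<sigma> r $ i $ j)"
    and sb: "\<And>r i j. \<bar>\<sigma> r $ i $ j\<bar> \<le> Cs"
    and T: "0 < T"
    and J: "\<And>m. - (real m * T) \<le> t \<Longrightarrow> wiener_integral M W (\<lambda>r. mexp ((t - r) *\<^sub>R A) ** \<sigma> r) (- (real m * T)) t (J m)"
    and Z: "wiener_integral_inf M W (\<lambda>r. mexp ((t - r) *\<^sub>R A) ** \<sigma> r) t Z"
  shows "AE \<omega> in M. (\<lambda>m. J m \<omega>) \<longlonglongrightarrow> Z \<omega>"
proof -
  interpret prob_space M using BM unfolding two_sided_BM_def by blast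
  define f where "f = (\<lambda>r. mexp ((t - r) *\<^sub>R A) ** \<sigma> r)"
  define K0 where "K0 = real CARD('m) * real CARD('d) * real CARD('m) * (real CARD('d) * Cs)\<^sup>2 / (- 2 * lam)"
  obtain m0 :: nat where m0: "- t < real m0 * T" using ex_less_of_nat_mult[OF T] by blast
  define u where "u = (\<lambda>m::nat. - (real (m + m0) * T))"
  have ut: "u m < t" for m
  proof -
    have "real m0 * T \<le> real (m + m0) * T" using T by (intro mult_right_mono) auto
    then show ?thesis using m0 by (simp add: u_def)
  qed
  define e where "e = (\<lambda>m. exp (lam * (t - u m) / 2))"
  have e0: "0 < e m" for m by (simp add: e_def)
  have Jm: "wiener_integral M W f (u m) t (J (m + m0))" for m
    using J[of "m + m0"] ut[of m] unfolding f_def u_def by simp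
  have Zf: "wiener_integral_inf M W f t Z" using Z unfolding f_def .
  have L2: "\<And>s \<eta>. s < u m \<Longrightarrow> 0 < \<eta> \<Longrightarrow> eventually (\<lambda>n. (LINT \<omega>|M. (norm (riemann_ito_sum W f (u m) t n \<omega> - riemann_ito_sum W f s t n \<omega>))\<^sup>2) \<le> K0 * exp (2 * lam * (t - u m)) + \<eta>) sequentially" for m
    unfolding f_def K0_def using L2_specific[OF BM lam Phi sc sb _ ut] by blast
  have pb: "measure M {\<omega>\<in>space M. 4 * e m < norm (J (m + m0) \<omega> - Z \<omega>)} \<le> K0 * exp (2 * lam * (t - u m)) / (e m)\<^sup>2" for m
    by (rule prob_bound[OF BM e0 less_imp_le[OF ut] Jm Zf L2])
  have pb2: "K0 * exp (2 * lam * (t - u m)) / (e m)\<^sup>2 = (K0 * exp (lam * (t + real m0 * T))) * exp (lam * T) ^ m" for m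
  proof -
    have "(e m)\<^sup>2 = exp (lam * (t - u m))" unfolding e_def by (simp add: power2_eq_square exp_add[symmetric])
    moreover have "exp (2 * lam * (t - u m)) = exp (lam * (t - u m)) * exp (lam * (t - u m))"
      by (simp add: exp_add[symmetric])
    moreover have "exp (lam * (t - u m)) = exp (lam * (t + real m0 * T)) * exp (lam * T) ^ m"
      by (simp add: u_def exp_add[symmetric] exp_of_nat_mult[symmetric] algebra_simps)
    ultimately show ?thesis by simp
  qed
  have sets: "{\<omega>\<in>space M. 4 * e m < norm (J (m + m0) \<omega> - Z \<omega>)} \<in> sets M" for m
  proof -
    have "J (m + m0) \<in> borel_measurable M" using Jm[of m] unfolding wiener_integral_def by blast
    moreover have "Z \<in> borel_measurable M" using Z unfolding wiener_integral_inf_def by blast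
    ultimately show ?thesis by measurable
  qed
  have summ: "summable (\<lambda>m. measure M {\<omega>\<in>space M. 4 * e m < norm (J (m + m0) \<omega> - Z \<omega>)})"
  proof (rule summable_comparison_test)
    show "summable (\<lambda>m. (K0 * exp (lam * (t + real m0 * T))) * exp (lam * T) ^ m)"
      using lam T by (intro summable_mult summable_geometric) (simp add: mult_neg_pos)
    show "\<exists>N. \<forall>m\<ge>N. norm (measure M {\<omega>\<in>space M. 4 * e m < norm (J (m + m0) \<omega> - Z \<omega>)}) \<le> (K0 * exp (lam * (t + real m0 * T))) * exp (lam * T) ^ m"
      using pb pb2 by auto
  qed
  have ae: "AE \<omega> in M. eventually (\<lambda>m. \<omega> \<in> space M - {\<omega>\<in>space M. 4 * e m < norm (J (m + m0) \<omega> - Z \<omega>)}) sequentially"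
    by (rule borel_cantelli_AE1[OF sets _ summ]) (simp add: less_top[symmetric])
  have elim: "(\<lambda>m. 4 * e m) \<longlonglongrightarrow> 0"
  proof -
    have eq: "e = (\<lambda>m. exp (lam * (t + real m0 * T) / 2) * exp (lam * T / 2) ^ m)"
      by (rule ext) (simp add: e_def u_def exp_add[symmetric] exp_of_nat_mult[symmetric] algebra_simps add_divide_distrib)
    moreover have "(\<lambda>m. exp (lam * (t + real m0 * T) / 2) * exp (lam * T / 2) ^ m) \<longlonglongrightarrow> exp (lam * (t + real m0 * T) / 2) * 0"
      using lam T by (intro tendsto_mult tendsto_const LIMSEQ_power_zero) (simp_all add: mult_neg_pos)
    ultimately have "e \<longlonglongrightarrow> 0" by (simp only: eq) simp
    then show ?thesis using tendsto_mult[OF tendsto_const[of 4]] by fastforce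
  qed
  show ?thesis
  proof (rule AE_mp[OF ae], rule AE_I2, rule impI)
    fix \<omega> assume ev: "eventually (\<lambda>m. \<omega> \<in> space M - {\<omega>\<in>space M. 4 * e m < norm (J (m + m0) \<omega> - Z \<omega>)}) sequentially"
    have "eventually (\<lambda>m. norm (J (m + m0) \<omega> - Z \<omega>) \<le> 4 * e m) sequentially"
      using ev by eventually_elim auto
    then have "(\<lambda>m. J (m + m0) \<omega> - Z \<omega>) \<longlonglongrightarrow> 0"
      by (rule Lim_null_comparison[OF _ elim])
    then have "(\<lambda>m. J (m + m0) \<omega>) \<longlonglongrightarrow> Z \<omega>" by (simp add: LIM_zero_iff)
    then show "(\<lambda>m. J m \<omega>) \<longlonglongrightarrow> Z \<omega>" by (rule LIMSEQ_offset)
  qed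
qed

lemma fatou_lower:
  fixes G :: "nat \<Rightarrow> real \<Rightarrow> real" and F :: "real \<Rightarrow> real"
  assumes G_nn: "\<And>m r. 0 \<le> G m r" and G_int: "\<And>m. integrable lborel (G m)"
    and F_int: "integrable lborel F" and F_nn: "\<And>r. 0 \<le> F r"
    and pw: "\<And>r \<delta>. 0 < \<delta> \<Longrightarrow> eventually (\<lambda>m. F r - \<delta> < G m r) sequentially"
    and y: "y < (LINT r|lborel. F r)"
  shows "eventually (\<lambda>m. y < (LINT r|lborel. G m r)) sequentially"
proof (cases "y < 0")
  case True
  have "0 \<le> (LINT r|lborel. G m r)" for m using G_nn by (simp add: integral_nonneg_AE)
  then show ?thesis using True by (intro always_eventually allI) (meson less_le_trans)
next
  case False
  have Gm[measurable]: "G m \<in> borel_measurable lborel" for m using G_int by (rule borel_measurable_integrable)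
  have pwe: "ennreal (F r) \<le> liminf (\<lambda>m. ennreal (G m r))" for r
  proof (unfold le_Liminf_iff, intro allI impI)
    fix z assume z: "z < ennreal (F r)"
    then obtain z' where z': "z = ennreal z'" "0 \<le> z'" "z' < F r"
      by (metis ennreal_cases ennreal_less_iff ennreal_less_zero_iff le_less_linear less_imp_le not_less_iff_gr_or_eq top.extremum_strict)
    have "eventually (\<lambda>m. F r - (F r - z') < G m r) sequentially" using z' by (intro pw) simp
    then show "eventually (\<lambda>m. z < ennreal (G m r)) sequentially"
      by eventually_elim (use z' in \<open>auto simp: ennreal_less_iff\<close>)
  qed
  have "ennreal (LINT r|lborel. F r) = (\<integral>\<^sup>+ r. ennreal (F r) \<partial>lborel)"
    using F_int F_nn by (simp add: nn_integral_eq_integral)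
  also have "\<dots> \<le> (\<integral>\<^sup>+ r. liminf (\<lambda>m. ennreal (G m r)) \<partial>lborel)"
    by (intro nn_integral_mono pwe)
  also have "\<dots> \<le> liminf (\<lambda>m. \<integral>\<^sup>+ r. ennreal (G m r) \<partial>lborel)"
    by (rule nn_integral_liminf) measurable
  also have "\<dots> = liminf (\<lambda>m. ennreal (LINT r|lborel. G m r))"
    using G_int G_nn by (simp add: nn_integral_eq_integral)
  finally have L: "ennreal (LINT r|lborel. F r) \<le> liminf (\<lambda>m. ennreal (LINT r|lborel. G m r))" .
  have "ennreal y < ennreal (LINT r|lborel. F r)" using False y by (simp add: ennreal_less_iff)
  then have "eventually (\<lambda>m. ennreal y < ennreal (LINT r|lborel. G m r)) sequentially"
    using L unfolding le_Liminf_iff by (meson less_le_trans)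
  then show ?thesis
    by eventually_elim (use False in \<open>auto simp: ennreal_less_iff\<close>)
qed

lemma liminf_real_facts:
  fixes x :: "nat \<Rightarrow> real"
  assumes b: "\<And>m. 0 \<le> x m" "\<And>m. x m \<le> B"
  shows "0 \<le> real_of_ereal (liminf (\<lambda>m. ereal (x m)))"
    "real_of_ereal (liminf (\<lambda>m. ereal (x m))) \<le> B"
    "ereal (real_of_ereal (liminf (\<lambda>m. ereal (x m)))) = liminf (\<lambda>m. ereal (x m))"
    "0 < \<delta> \<Longrightarrow> eventually (\<lambda>m. real_of_ereal (liminf (\<lambda>m. ereal (x m))) - \<delta> < x m) sequentially"
proof -
  let ?L = "liminf (\<lambda>m. ereal (x m))"
  have l0: "0 \<le> ?L" using b by (intro Liminf_bounded) auto
  have "?L \<le> limsup (\<lambda>m. ereal (x m))" by (rule Liminf_le_Limsup) simp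
  also have "\<dots> \<le> ereal B" using b by (intro Limsup_bounded) auto
  finally have lB: "?L \<le> ereal B" .
  have fin: "ereal (real_of_ereal ?L) = ?L" using l0 lB by (cases ?L) auto
  show "0 \<le> real_of_ereal ?L" using l0 by (simp add: real_of_ereal_pos)
  show "real_of_ereal ?L \<le> B" using lB fin by (metis ereal_less_eq(3))
  show "ereal (real_of_ereal ?L) = ?L" by (rule fin)
  assume d: "0 < \<delta>"
  have "ereal (real_of_ereal ?L - \<delta>) < ereal (real_of_ereal ?L)" using d by simp
  then have "ereal (real_of_ereal ?L - \<delta>) < ?L" using fin by simp
  then have "eventually (\<lambda>m. ereal (real_of_ereal ?L - \<delta>) < ereal (x m)) sequentially" by (rule less_LiminfD)
  then show "eventually (\<lambda>m. real_of_ereal ?L - \<delta> < x m) sequentially" by simp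
qed

lemma limsup_real_facts:
  fixes x :: "nat \<Rightarrow> real"
  assumes b: "\<And>m. 0 \<le> x m" "\<And>m. x m \<le> B"
  shows "0 \<le> real_of_ereal (limsup (\<lambda>m. ereal (x m)))"
    "real_of_ereal (limsup (\<lambda>m. ereal (x m))) \<le> B"
    "ereal (real_of_ereal (limsup (\<lambda>m. ereal (x m)))) = limsup (\<lambda>m. ereal (x m))"
    "0 < \<delta> \<Longrightarrow> eventually (\<lambda>m. x m < real_of_ereal (limsup (\<lambda>m. ereal (x m))) + \<delta>) sequentially"
proof -
  let ?L = "limsup (\<lambda>m. ereal (x m))"
  have "0 \<le> liminf (\<lambda>m. ereal (x m))" using b by (intro Liminf_bounded) auto
  also have "\<dots> \<le> ?L" by (rule Liminf_le_Limsup) simp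
  finally have l0: "0 \<le> ?L" .
  have lB: "?L \<le> ereal B" using b by (intro Limsup_bounded) auto
  have fin: "ereal (real_of_ereal ?L) = ?L" using l0 lB by (cases ?L) auto
  show "0 \<le> real_of_ereal ?L" using l0 by (simp add: real_of_ereal_pos)
  show "real_of_ereal ?L \<le> B" using lB fin by (metis ereal_less_eq(3))
  show "ereal (real_of_ereal ?L) = ?L" by (rule fin)
  assume d: "0 < \<delta>"
  have "ereal (real_of_ereal ?L) < ereal (real_of_ereal ?L + \<delta>)" using d by simp
  then have "?L < ereal (real_of_ereal ?L + \<delta>)" using fin by simp
  then have "eventually (\<lambda>m. ereal (x m) < ereal (real_of_ereal ?L + \<delta>)) sequentially" by (rule Limsup_lessD)
  then show "eventually (\<lambda>m. x m < real_of_ereal ?L + \<delta>) sequentially" by simp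
qed

lemma exp_halfline_integrable:
  fixes lam t :: real
  assumes lam: "lam < 0"
  shows "integrable lborel (\<lambda>r. indicator {..t} r * exp (lam * (t - r)))"
proof -
  define l where "l = - lam"
  have l: "0 < l" using lam by (simp add: l_def)
  have Em[measurable]: "exponential_density l \<in> borel_measurable borel"
    unfolding exponential_density_def by measurable
  have "emeasure (density lborel (exponential_density l)) UNIV = 1"
    using prob_space.emeasure_space_1[OF prob_space_exponential_density[OF l]] by simp
  then have "(\<integral>\<^sup>+ x. ennreal (exponential_density l x) \<partial>lborel) = 1"
    by (simp add: emeasure_density)
  then have ie: "integrable lborel (exponential_density l)"
    by (intro integrableI_nonneg) (auto simp: exponential_density_nonneg[OF l])
  have "integrable lborel (\<lambda>r. exponential_density l (t + (-1) * r))"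
    by (rule lborel_integrable_real_affine[OF ie]) simp
  then have "integrable lborel (\<lambda>r. (1 / l) * exponential_density l (t + (-1) * r))"
    by (rule integrable_mult_right)
  moreover have "(\<lambda>r. (1 / l) * exponential_density l (t + (-1) * r)) = (\<lambda>r. indicator {..t} r * exp (lam * (t - r)))"
    using l by (auto simp: fun_eq_iff exponential_density_def l_def indicator_def algebra_simps)
  ultimately show ?thesis by simp
qed

lemma ev_ge_neg:
  assumes T: "0 < T"
  shows "eventually (\<lambda>m::nat. - (real m * T) \<le> r) sequentially"
proof -
  obtain N :: nat where N: "- r < real N * T" using ex_less_of_nat_mult[OF T] by blast
  show ?thesis
  proof (rule eventually_sequentiallyI[of N])
    fix m assume "N \<le> m"
    then have "real N * T \<le> real m * T" using T by (intro mult_right_mono) auto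
    then show "- (real m * T) \<le> r" using N by linarith
  qed
qed

lemma cont_comp_h:
  fixes h :: "real \<Rightarrow> real^'d \<Rightarrow> real^'d"
  assumes hc: "continuous_on UNIV (\<lambda>(t, y). h t y)" and pc: "continuous_on S p"
  shows "continuous_on S (\<lambda>r. h r (p r) $ j)"
proof -
  have "continuous_on S ((\<lambda>(t, y). h t y) \<circ> (\<lambda>r. (r, p r)))"
    by (intro continuous_on_compose continuous_intros pc) (rule continuous_on_subset[OF hc], simp)
  then have "continuous_on S (\<lambda>r. h r (p r))" by (simp add: comp_def)
  then show ?thesis by (intro continuous_intros)
qed

lemma trunc_meas:
  fixes h :: "real \<Rightarrow> real^'d \<Rightarrow> real^'d" and \<psi> :: "nat \<Rightarrow> real \<Rightarrow> real^'d"
  assumes hc: "continuous_on UNIV (\<lambda>(t, y). h t y)"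
    and pc: "\<And>m. continuous_on {- (real m * T)..} (\<psi> m)"
  shows "(\<lambda>r. indicator {- (real m * T)..} r * h r (\<psi> m r) $ j) \<in> borel_measurable borel"
  using borel_measurable_continuous_on_indicator[OF _ cont_comp_h[OF hc pc]] by simp

lemma liminf_h_meas:
  fixes h :: "real \<Rightarrow> real^'d \<Rightarrow> real^'d" and \<psi> :: "nat \<Rightarrow> real \<Rightarrow> real^'d"
  assumes hc: "continuous_on UNIV (\<lambda>(t, y). h t y)" and T: "0 < T"
    and pc: "\<And>m. continuous_on {- (real m * T)..} (\<psi> m)"
  shows "(\<lambda>r. real_of_ereal (liminf (\<lambda>m. ereal (h r (\<psi> m r) $ j)))) \<in> borel_measurable borel"
    and "(\<lambda>r. real_of_ereal (limsup (\<lambda>m. ereal (h r (\<psi> m r) $ j)))) \<in> borel_measurable borel"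
proof -
  let ?g = "\<lambda>m r. indicator {- (real m * T)..} r * h r (\<psi> m r) $ j"
  have gm: "(\<lambda>r. ereal (?g m r)) \<in> borel_measurable borel" for m
    using trunc_meas[OF hc pc] by measurable
  have ev: "eventually (\<lambda>m. ereal (h r (\<psi> m r) $ j) = ereal (?g m r)) sequentially" for r
    using ev_ge_neg[OF T, of r] by eventually_elim (simp add: indicator_def)
  have "(\<lambda>r. liminf (\<lambda>m. ereal (h r (\<psi> m r) $ j))) = (\<lambda>r. liminf (\<lambda>m. ereal (?g m r)))"
    by (rule ext, rule Liminf_eq[OF ev])
  moreover have "(\<lambda>r. liminf (\<lambda>m. ereal (?g m r))) \<in> borel_measurable borel"
    by (rule borel_measurable_liminf[OF gm])
  ultimately show "(\<lambda>r. real_of_ereal (liminf (\<lambda>m. ereal (h r (\<psi> m r) $ j)))) \<in> borel_measurable borel"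
    by (simp add: borel_measurable_real_of_ereal)
  have "(\<lambda>r. limsup (\<lambda>m. ereal (h r (\<psi> m r) $ j))) = (\<lambda>r. limsup (\<lambda>m. ereal (?g m r)))"
    by (rule ext, rule Limsup_eq[OF ev])
  moreover have "(\<lambda>r. limsup (\<lambda>m. ereal (?g m r))) \<in> borel_measurable borel"
    by (rule borel_measurable_limsup[OF gm])
  ultimately show "(\<lambda>r. real_of_ereal (limsup (\<lambda>m. ereal (h r (\<psi> m r) $ j)))) \<in> borel_measurable borel"
    by (simp add: borel_measurable_real_of_ereal)
qed

lemma arith_lo: "z - e < b \<Longrightarrow> c - e < H \<Longrightarrow> a = b + H \<Longrightarrow> e = (c + z - y) / 2 \<Longrightarrow> y < (a::real)"
  by (simp add: field_simps)

lemma arith_up: "b < z + e \<Longrightarrow> H < c + e \<Longrightarrow> a = b + H \<Longrightarrow> e = (y - (c + z)) / 2 \<Longrightarrow> a < (y::real)"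
  by (simp add: field_simps)

lemma ev_scaled_lower:
  fixes c l :: real and x :: "nat \<Rightarrow> real"
  assumes c: "0 \<le> c" and eta: "0 < \<eta>" and ev: "\<And>\<delta>. 0 < \<delta> \<Longrightarrow> eventually (\<lambda>m. l - \<delta> < x m) sequentially"
  shows "eventually (\<lambda>m. c * l - \<eta> < c * x m) sequentially"
proof (cases "c = 0")
  case True then show ?thesis using eta by simp
next
  case False
  then have c': "0 < c" using c by simp
  have "eventually (\<lambda>m. l - \<eta> / c < x m) sequentially" using c' eta by (intro ev) simp
  then show ?thesis
  proof eventually_elim
    case (elim m)
    then have "c * (l - \<eta> / c) < c * x m" using c' by simp
    then show ?case using c' by (simp add: algebra_simps)
  qed
qed

lemma ev_scaled_upper:
  fixes c l :: real and x :: "nat \<Rightarrow> real"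
  assumes c: "0 \<le> c" and eta: "0 < \<eta>" and ev: "\<And>\<delta>. 0 < \<delta> \<Longrightarrow> eventually (\<lambda>m. x m < l + \<delta>) sequentially"
  shows "eventually (\<lambda>m. c * x m < c * l + \<eta>) sequentially"
proof (cases "c = 0")
  case True then show ?thesis using eta by simp
next
  case False
  then have c': "0 < c" using c by simp
  have "eventually (\<lambda>m. x m < l + \<eta> / c) sequentially" using c' eta by (intro ev) simp
  then show ?thesis
  proof eventually_elim
    case (elim m)
    then have "c * x m < c * (l + \<eta> / c)" using c' by simp
    then show ?case using c' by (simp add: algebra_simps)
  qed
qed

lemma ev_sum_lower:
  fixes a b :: "'j::finite \<Rightarrow> nat \<Rightarrow> real" and B :: "'j \<Rightarrow> real"
  assumes "\<And>j \<eta>. 0 < \<eta> \<Longrightarrow> eventually (\<lambda>m. B j - \<eta> < a j m) sequentially" and d: "0 < \<delta>"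
  shows "eventually (\<lambda>m. (\<Sum>j\<in>UNIV. B j) - \<delta> < (\<Sum>j\<in>UNIV. a j m)) sequentially"
proof -
  have "eventually (\<lambda>m. \<forall>j. B j - \<delta> / real CARD('j) < a j m) sequentially"
    by (intro eventually_all_finite assms) (simp add: d)
  then show ?thesis
  proof eventually_elim
    case (elim m)
    have "(\<Sum>j\<in>(UNIV::'j set). B j - \<delta> / real CARD('j)) < (\<Sum>j\<in>UNIV. a j m)"
      by (rule sum_strict_mono) (use elim in auto)
    then show ?case by (simp add: sum_subtractf)
  qed
qed

lemma ev_sum_upper:
  fixes a b :: "'j::finite \<Rightarrow> nat \<Rightarrow> real" and B :: "'j \<Rightarrow> real"
  assumes "\<And>j \<eta>. 0 < \<eta> \<Longrightarrow> eventually (\<lambda>m. a j m < B j + \<eta>) sequentially" and d: "0 < \<delta>"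
  shows "eventually (\<lambda>m. (\<Sum>j\<in>UNIV. a j m) < (\<Sum>j\<in>UNIV. B j) + \<delta>) sequentially"
proof -
  have "eventually (\<lambda>m. \<forall>j. a j m < B j + \<delta> / real CARD('j)) sequentially"
    by (intro eventually_all_finite assms) (simp add: d)
  then show ?thesis
  proof eventually_elim
    case (elim m)
    have "(\<Sum>j\<in>UNIV. a j m) < (\<Sum>j\<in>(UNIV::'j set). B j + \<delta> / real CARD('j))"
      by (rule sum_strict_mono) (use elim in auto)
    then show ?case by (simp add: sum.distrib)
  qed
qed

context
  fixes A :: "real^'d^'d" and h :: "real \<Rightarrow> real^'d \<Rightarrow> real^'d" and \<psi> :: "nat \<Rightarrow> real \<Rightarrow> real^'d"
    and T t lam Bh :: real
  assumes lam: "lam < 0"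
    and Phi: "\<And>\<tau>. 0 \<le> \<tau> \<Longrightarrow> mnorm (mexp (\<tau> *\<^sub>R A)) \<le> exp (lam * \<tau>)"
    and Pnn: "\<And>\<tau> k l. 0 \<le> \<tau> \<Longrightarrow> 0 \<le> mexp (\<tau> *\<^sub>R A) $ k $ l"
    and hc: "continuous_on UNIV (\<lambda>(t, y). h t y)"
    and hnn: "\<And>s y j. 0 \<le> h s y $ j" and hb: "\<And>s y j. h s y $ j \<le> Bh"
    and T: "0 < T"
    and pc: "\<And>m. continuous_on {- (real m * T)..} (\<psi> m)"
begin

lemma Phi_entry: "r \<le> t \<Longrightarrow> \<bar>mexp ((t - r) *\<^sub>R A) $ k $ l\<bar> \<le> exp (lam * (t - r))"
  using mnorm_ge[of "mexp ((t - r) *\<^sub>R A)" k l] Phi[of "t - r"] by simp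

lemma Phi_cont: "continuous_on S (\<lambda>r. mexp ((t - r) *\<^sub>R A) $ k $ l)"
proof -
  have "continuous_on S ((\<lambda>\<tau>. mexp (\<tau> *\<^sub>R A) $ k $ l) \<circ> (\<lambda>r. t - r))"
    by (intro continuous_on_compose continuous_intros) (simp add: continuous_at_imp_continuous_on mexp_cont_entry mexp_continuous_on)
  then show ?thesis by (simp add: comp_def)
qed

lemma Bh_nn: "0 \<le> Bh" using hnn[of 0 0 undefined] hb[of 0 0 undefined] by linarith

definition ulo :: "real \<Rightarrow> real^'d" where
  "ulo r = (\<chi> j. real_of_ereal (liminf (\<lambda>m. ereal (h r (\<psi> m r) $ j))))"
definition uup :: "real \<Rightarrow> real^'d" where
  "uup r = (\<chi> j. real_of_ereal (limsup (\<lambda>m. ereal (h r (\<psi> m r) $ j))))"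

lemma ulo_facts: "0 \<le> ulo r $ j" "ulo r $ j \<le> Bh"
  "0 < \<delta> \<Longrightarrow> eventually (\<lambda>m. ulo r $ j - \<delta> < h r (\<psi> m r) $ j) sequentially"
  using liminf_real_facts(1-3)[of "\<lambda>m. h r (\<psi> m r) $ j" Bh] liminf_real_facts(4)[of "\<lambda>m. h r (\<psi> m r) $ j" Bh \<delta>] hnn hb
  by (auto simp: ulo_def)

lemma uup_facts: "0 \<le> uup r $ j" "uup r $ j \<le> Bh"
  "0 < \<delta> \<Longrightarrow> eventually (\<lambda>m. h r (\<psi> m r) $ j < uup r $ j + \<delta>) sequentially"
  using limsup_real_facts(1-3)[of "\<lambda>m. h r (\<psi> m r) $ j" Bh] limsup_real_facts(4)[of "\<lambda>m. h r (\<psi> m r) $ j" Bh \<delta>] hnn hb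
  by (auto simp: uup_def)

lemma u_meas: "(\<lambda>r. ulo r $ j) \<in> borel_measurable borel" "(\<lambda>r. uup r $ j) \<in> borel_measurable borel"
  using liminf_h_meas[OF hc T pc, of j] by (simp_all add: ulo_def uup_def)

lemma vec_integrable:
  assumes um: "\<And>j. (\<lambda>r. u r $ j) \<in> borel_measurable borel"
    and ub: "\<And>r j. 0 \<le> u r $ j \<and> u r $ j \<le> Bh"
  shows "set_integrable lborel {..t} (\<lambda>r. mexp ((t - r) *\<^sub>R A) *v u r)"
    and "(LINT r:{..t}|lborel. mexp ((t - r) *\<^sub>R A) *v u r) $ i
          = (LINT r|lborel. indicator {..t} r * (mexp ((t - r) *\<^sub>R A) *v u r) $ i)"
proof -
  let ?V = "\<lambda>r. indicator {..t} r *\<^sub>R (mexp ((t - r) *\<^sub>R A) *v u r)"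
  have col[measurable]: "(\<lambda>r. (\<chi> k. mexp ((t - r) *\<^sub>R A) $ k $ j)) \<in> borel_measurable borel" for j
  proof -
    have "continuous_on UNIV (\<lambda>r. (\<chi> k. mexp ((t - r) *\<^sub>R A) $ k $ j))"
      by (rule continuous_on_vec_lambda) (rule Phi_cont)
    then show ?thesis by (rule borel_measurable_continuous_onI)
  qed
  have umm[measurable]: "(\<lambda>r. u r $ j) \<in> borel_measurable borel" for j by (rule um)
  have eq: "mexp ((t - r) *\<^sub>R A) *v u r = (\<Sum>j\<in>UNIV. (u r $ j) *\<^sub>R (\<chi> k. mexp ((t - r) *\<^sub>R A) $ k $ j))" for r
    by (simp add: vec_eq_iff matrix_vector_mult_def sum_component mult.commute)
  have Vm0: "?V \<in> borel_measurable borel"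
    unfolding eq by measurable
  then have Vm: "?V \<in> borel_measurable lborel" by simp
  have dom: "integrable lborel (\<lambda>r. real CARD('d) * (real CARD('d) * Bh) * (indicator {..t} r * exp (lam * (t - r))))"
    using exp_halfline_integrable[OF lam, of t] by simp
  have cb: "\<bar>(mexp ((t - r) *\<^sub>R A) *v u r) $ k\<bar> \<le> real CARD('d) * Bh * exp (lam * (t - r))" if "r \<le> t" for r k
  proof -
    have "\<bar>(mexp ((t - r) *\<^sub>R A) *v u r) $ k\<bar> = \<bar>\<Sum>j\<in>UNIV. mexp ((t - r) *\<^sub>R A) $ k $ j * u r $ j\<bar>"
      by (simp add: matrix_vector_mult_def)
    also have "\<dots> \<le> (\<Sum>j\<in>UNIV. \<bar>mexp ((t - r) *\<^sub>R A) $ k $ j * u r $ j\<bar>)" by (rule sum_abs)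
    also have "\<dots> \<le> (\<Sum>j\<in>(UNIV::'d set). exp (lam * (t - r)) * Bh)"
      by (intro sum_mono) (use Phi_entry[OF that] ub in \<open>auto simp: abs_mult intro!: mult_mono\<close>)
    finally show ?thesis by (simp add: algebra_simps)
  qed
  have nb: "norm (?V r) \<le> real CARD('d) * (real CARD('d) * Bh) * (indicator {..t} r * exp (lam * (t - r)))" for r
  proof (cases "r \<le> t")
    case True
    have "norm (?V r) = norm (mexp ((t - r) *\<^sub>R A) *v u r)" using True by (simp add: indicator_def)
    also have "\<dots> \<le> (\<Sum>k\<in>UNIV. \<bar>(mexp ((t - r) *\<^sub>R A) *v u r) $ k\<bar>)" by (rule norm_le_l1_cart)
    also have "\<dots> \<le> (\<Sum>k\<in>(UNIV::'d set). real CARD('d) * Bh * exp (lam * (t - r)))"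
      by (intro sum_mono cb True)
    finally show ?thesis using True by (simp add: indicator_def algebra_simps)
  next
    case False then show ?thesis by (simp add: indicator_def)
  qed
  have Vi: "integrable lborel ?V"
    by (rule Bochner_Integration.integrable_bound[OF dom Vm]) (use nb Bh_nn in \<open>auto intro!: AE_I2 order_trans[OF _ abs_ge_self]\<close>)
  then show "set_integrable lborel {..t} (\<lambda>r. mexp ((t - r) *\<^sub>R A) *v u r)"
    by (simp add: set_integrable_def)
  have "(LINT r:{..t}|lborel. mexp ((t - r) *\<^sub>R A) *v u r) $ i = (LINT r|lborel. (?V r) $ i)"
    unfolding set_lebesgue_integral_def
    by (rule integral_bounded_linear[OF bounded_linear_vec_nth Vi, symmetric])
  then show "(LINT r:{..t}|lborel. mexp ((t - r) *\<^sub>R A) *v u r) $ i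
          = (LINT r|lborel. indicator {..t} r * (mexp ((t - r) *\<^sub>R A) *v u r) $ i)"
    by simp
qed


definition Hm :: "nat \<Rightarrow> real^'d" where
  "Hm m = integral {- (real m * T)..t} (\<lambda>r. mexp ((t - r) *\<^sub>R A) *v h r (\<psi> m r))"

definition Gm :: "nat \<Rightarrow> 'd \<Rightarrow> real \<Rightarrow> real" where
  "Gm m i r = indicator {- (real m * T)..t} r * (mexp ((t - r) *\<^sub>R A) *v h r (\<psi> m r)) $ i"

lemma mv_expand: "(M *v v) $ i = (\<Sum>j\<in>UNIV. M $ i $ j * v $ j)"
  by (simp add: matrix_vector_mult_def)

lemma G_props: "integrable lborel (Gm m i)" "Hm m $ i = (LINT r|lborel. Gm m i r)" "0 \<le> Gm m i r"
proof -
  let ?a = "- (real m * T)"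
  let ?F = "\<lambda>r. mexp ((t - r) *\<^sub>R A) *v h r (\<psi> m r)"
  have hcm: "continuous_on {?a..t} (\<lambda>r. h r (\<psi> m r) $ j)" for j
    by (rule cont_comp_h[OF hc continuous_on_subset[OF pc]]) auto
  have Fc_i: "continuous_on {?a..t} (\<lambda>r. ?F r $ k)" for k
    unfolding mv_expand by (intro continuous_on_sum continuous_on_mult Phi_cont hcm)
  have Fc: "continuous_on {?a..t} ?F"
    by (rule continuous_on_vec_lambda[where f="\<lambda>k r. ?F r $ k", simplified]) (rule Fc_i)
  have si: "set_integrable lborel {?a..t} (\<lambda>r. ?F r $ i)"
    unfolding set_integrable_def using borel_integrable_compact[OF compact_Icc Fc_i] by simp
  show "integrable lborel (Gm m i)"
    using si unfolding set_integrable_def Gm_def by (simp add: fun_eq_iff)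
  have "Hm m $ i = integral {?a..t} (\<lambda>r. ?F r $ i)"
    unfolding Hm_def by (rule integral_component_eq_cart[symmetric]) (rule integrable_continuous_interval[OF Fc])
  also have "\<dots> = (LINT r:{?a..t}|lborel. ?F r $ i)"
    by (rule set_borel_integral_eq_integral(2)[OF si, symmetric])
  also have "\<dots> = (LINT r|lborel. Gm m i r)"
    unfolding set_lebesgue_integral_def Gm_def by simp
  finally show "Hm m $ i = (LINT r|lborel. Gm m i r)" .
  show "0 \<le> Gm m i r"
    unfolding Gm_def mv_expand using Pnn hnn
    by (auto simp: indicator_def intro!: sum_nonneg mult_nonneg_nonneg)
qed

lemma G_eq: "- (real m * T) \<le> r \<Longrightarrow> r \<le> t \<Longrightarrow> Gm m i r = (\<Sum>j\<in>UNIV. mexp ((t - r) *\<^sub>R A) $ i $ j * h r (\<psi> m r) $ j)"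
  by (simp add: Gm_def mv_expand indicator_def)

lemma G_zero: "t < r \<Longrightarrow> Gm m i r = 0"
  by (simp add: Gm_def indicator_def)

lemma lower:
  assumes y: "y < (LINT r:{..t}|lborel. mexp ((t - r) *\<^sub>R A) *v ulo r) $ i"
  shows "eventually (\<lambda>m. y < Hm m $ i) sequentially"
proof -
  let ?F = "\<lambda>r. indicator {..t} r * (mexp ((t - r) *\<^sub>R A) *v ulo r) $ i"
  have ub: "0 \<le> ulo r $ j \<and> ulo r $ j \<le> Bh" for r j using ulo_facts by blast
  note VI = vec_integrable[OF u_meas(1) ub]
  have Fi: "integrable lborel ?F"
    using integrable_bounded_linear[OF bounded_linear_vec_nth VI(1)[unfolded set_integrable_def], of i] by simp
  have Fnn: "0 \<le> ?F r" for r
    unfolding mv_expand using Pnn ub by (auto simp: indicator_def intro!: sum_nonneg mult_nonneg_nonneg)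
  have pw: "eventually (\<lambda>m. ?F r - \<delta> < Gm m i r) sequentially" if d: "0 < \<delta>" for r \<delta>
  proof (cases "r \<le> t")
    case False then show ?thesis using d by (simp add: G_zero indicator_def)
  next
    case True
    have "eventually (\<lambda>m. (\<Sum>j\<in>UNIV. mexp ((t - r) *\<^sub>R A) $ i $ j * ulo r $ j) - \<delta>
        < (\<Sum>j\<in>UNIV. mexp ((t - r) *\<^sub>R A) $ i $ j * h r (\<psi> m r) $ j)) sequentially"
      by (intro ev_sum_lower ev_scaled_lower ulo_facts(3) Pnn d) (use True in simp_all)
    moreover have "eventually (\<lambda>m. - (real m * T) \<le> r) sequentially" by (rule ev_ge_neg[OF T])
    ultimately show ?thesis
      by eventually_elim (use True in \<open>simp add: G_eq mv_expand indicator_def\<close>)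
  qed
  have "eventually (\<lambda>m. y < (LINT r|lborel. Gm m i r)) sequentially"
    by (rule fatou_lower[OF G_props(3) G_props(1) Fi Fnn pw]) (use y VI(2) in simp_all)
  then show ?thesis by (simp add: G_props(2))
qed


lemma G_le: "Gm m i r \<le> indicator {..t} r * (real CARD('d) * Bh * exp (lam * (t - r)))"
proof (cases "- (real m * T) \<le> r \<and> r \<le> t")
  case True
  have "Gm m i r = (\<Sum>j\<in>UNIV. mexp ((t - r) *\<^sub>R A) $ i $ j * h r (\<psi> m r) $ j)" using True by (simp add: G_eq)
  also have "\<dots> \<le> (\<Sum>j\<in>(UNIV::'d set). exp (lam * (t - r)) * Bh)"
    by (intro sum_mono mult_mono) (use Phi_entry[of r i] True Pnn hnn hb in \<open>auto simp: abs_le_iff\<close>)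
  finally show ?thesis using True by (simp add: indicator_def algebra_simps)
next
  case False
  then have "Gm m i r = 0" by (auto simp: Gm_def indicator_def)
  then show ?thesis using Bh_nn by (simp add: indicator_def)
qed

lemma upper:
  assumes y: "(LINT r:{..t}|lborel. mexp ((t - r) *\<^sub>R A) *v uup r) $ i < y"
  shows "eventually (\<lambda>m. Hm m $ i < y) sequentially"
proof -
  let ?D = "\<lambda>r. indicator {..t} r * (real CARD('d) * Bh * exp (lam * (t - r)))"
  let ?F = "\<lambda>r. indicator {..t} r * (mexp ((t - r) *\<^sub>R A) *v uup r) $ i"
  have ub: "0 \<le> uup r $ j \<and> uup r $ j \<le> Bh" for r j using uup_facts by blast
  note VI = vec_integrable[OF u_meas(2) ub]
  have Fi: "integrable lborel ?F"
    using integrable_bounded_linear[OF bounded_linear_vec_nth VI(1)[unfolded set_integrable_def], of i] by simp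
  have Di: "integrable lborel ?D"
    using integrable_mult_right[OF exp_halfline_integrable[OF lam, of t], of "real CARD('d) * Bh"]
    by (simp add: algebra_simps)
  have FD: "?F r \<le> ?D r" for r
  proof (cases "r \<le> t")
    case True
    have "?F r = (\<Sum>j\<in>UNIV. mexp ((t - r) *\<^sub>R A) $ i $ j * uup r $ j)" using True by (simp add: mv_expand indicator_def)
    also have "\<dots> \<le> (\<Sum>j\<in>(UNIV::'d set). exp (lam * (t - r)) * Bh)"
      by (intro sum_mono mult_mono) (use Phi_entry[of r i] True Pnn ub in \<open>auto simp: abs_le_iff\<close>)
    finally show ?thesis using True by (simp add: indicator_def algebra_simps)
  next
    case False then show ?thesis by (simp add: indicator_def)
  qed
  have pw: "eventually (\<lambda>m. (?D r - ?F r) - \<delta> < ?D r - Gm m i r) sequentially" if d: "0 < \<delta>" for r \<delta>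
  proof (cases "r \<le> t")
    case False then show ?thesis using d by (simp add: G_zero indicator_def)
  next
    case True
    have "eventually (\<lambda>m. (\<Sum>j\<in>UNIV. mexp ((t - r) *\<^sub>R A) $ i $ j * h r (\<psi> m r) $ j)
        < (\<Sum>j\<in>UNIV. mexp ((t - r) *\<^sub>R A) $ i $ j * uup r $ j) + \<delta>) sequentially"
      by (intro ev_sum_upper ev_scaled_upper uup_facts(3) Pnn d) (use True in simp_all)
    moreover have "eventually (\<lambda>m. - (real m * T) \<le> r) sequentially" by (rule ev_ge_neg[OF T])
    ultimately show ?thesis
      by eventually_elim (use True in \<open>simp add: G_eq mv_expand indicator_def\<close>)
  qed
  have "eventually (\<lambda>m. (LINT r|lborel. ?D r) - y < (LINT r|lborel. ?D r - Gm m i r)) sequentially"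
  proof (rule fatou_lower[where G="\<lambda>m r. ?D r - Gm m i r" and F="\<lambda>r. ?D r - ?F r"])
    show "0 \<le> ?D r - Gm m i r" for m r using G_le[of m i r] by simp
    show "integrable lborel (\<lambda>r. ?D r - Gm m i r)" for m using Di G_props(1) by simp
    show "integrable lborel (\<lambda>r. ?D r - ?F r)" using Di Fi by simp
    show "0 \<le> ?D r - ?F r" for r using FD[of r] by simp
    show "eventually (\<lambda>m. (?D r - ?F r) - \<delta> < ?D r - Gm m i r) sequentially" if "0 < \<delta>" for r \<delta>
      using pw[OF that] by simp
    show "(LINT r|lborel. ?D r) - y < (LINT r|lborel. ?D r - ?F r)"
      using y VI(2) Di Fi by simp
  qed
  then show ?thesis
    using Di G_props(1) by (simp add: G_props(2))
qed


lemma Pdecay: "(\<lambda>m::nat. (mexp ((t - - (real m * T)) *\<^sub>R A) *v x0) $ i) \<longlonglongrightarrow> 0"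
proof -
  let ?q = "(\<Sum>j\<in>UNIV. \<bar>x0 $ j\<bar>) * exp (lam * t)"
  have g: "(\<lambda>m::nat. ?q * exp (lam * T) ^ m) \<longlonglongrightarrow> ?q * 0"
    using lam T by (intro tendsto_mult tendsto_const LIMSEQ_power_zero) (simp_all add: mult_neg_pos)
  have "eventually (\<lambda>m::nat. norm ((mexp ((t - - (real m * T)) *\<^sub>R A) *v x0) $ i) \<le> ?q * exp (lam * T) ^ m) sequentially"
    using ev_ge_neg[OF T, of t]
  proof eventually_elim
    case (elim m)
    have "norm ((mexp ((t - - (real m * T)) *\<^sub>R A) *v x0) $ i) = \<bar>\<Sum>j\<in>UNIV. mexp ((t + real m * T) *\<^sub>R A) $ i $ j * x0 $ j\<bar>"
      by (simp add: mv_expand)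
    also have "\<dots> \<le> (\<Sum>j\<in>UNIV. \<bar>mexp ((t + real m * T) *\<^sub>R A) $ i $ j * x0 $ j\<bar>)" by (rule sum_abs)
    also have "\<dots> \<le> (\<Sum>j\<in>UNIV. exp (lam * (t + real m * T)) * \<bar>x0 $ j\<bar>)"
    proof (intro sum_mono)
      fix j
      have "\<bar>mexp ((t + real m * T) *\<^sub>R A) $ i $ j\<bar> \<le> exp (lam * (t + real m * T))"
        using mnorm_ge[of "mexp ((t + real m * T) *\<^sub>R A)" i j] Phi[of "t + real m * T"] elim by simp
      then show "\<bar>mexp ((t + real m * T) *\<^sub>R A) $ i $ j * x0 $ j\<bar> \<le> exp (lam * (t + real m * T)) * \<bar>x0 $ j\<bar>"
        by (simp add: abs_mult mult_right_mono)
    qed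
    also have "\<dots> = ?q * exp (lam * T) ^ m"
    proof -
      have ee: "exp (lam * (t + real m * T)) = exp (lam * t) * exp (lam * T) ^ m"
        by (simp add: exp_add[symmetric] exp_of_nat_mult[symmetric] algebra_simps)
      show ?thesis unfolding ee by (simp add: sum_distrib_right sum_distrib_left mult.commute mult.left_commute)
    qed
    finally show ?case .
  qed
  then show ?thesis by (rule Lim_null_comparison) (rule g[simplified])
qed

lemma DA:
  fixes av Jv :: "nat \<Rightarrow> real^'d"
  assumes eqs: "\<And>m. - (real m * T) \<le> t \<Longrightarrow> av m = mexp ((t - - (real m * T)) *\<^sub>R A) *v x0 + Hm m + Jv m"
    and Jc: "Jv \<longlonglongrightarrow> zv"
  shows "ereal ((LINT r:{..t}|lborel. mexp ((t - r) *\<^sub>R A) *v ulo r) $ i + zv $ i) \<le> liminf (\<lambda>m. ereal (av m $ i))"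
    and "limsup (\<lambda>m. ereal (av m $ i)) \<le> ereal ((LINT r:{..t}|lborel. mexp ((t - r) *\<^sub>R A) *v uup r) $ i + zv $ i)"
proof -
  let ?cl = "(LINT r:{..t}|lborel. mexp ((t - r) *\<^sub>R A) *v ulo r) $ i"
  let ?cu = "(LINT r:{..t}|lborel. mexp ((t - r) *\<^sub>R A) *v uup r) $ i"
  let ?b = "\<lambda>m. (mexp ((t - - (real m * T)) *\<^sub>R A) *v x0) $ i + Jv m $ i"
  have bc: "?b \<longlonglongrightarrow> 0 + zv $ i"
    by (intro tendsto_add Pdecay tendsto_vec_nth Jc)
  have aeq: "eventually (\<lambda>m. av m $ i = ?b m + Hm m $ i) sequentially"
    using ev_ge_neg[OF T, of t] by eventually_elim (simp add: eqs)
  show "ereal (?cl + zv $ i) \<le> liminf (\<lambda>m. ereal (av m $ i))"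
  proof (unfold le_Liminf_iff, intro allI impI)
    fix y :: ereal assume y: "y < ereal (?cl + zv $ i)"
    show "eventually (\<lambda>m. y < ereal (av m $ i)) sequentially"
    proof (cases y)
      case (real y')
      note yy = this
      define e where "e = (?cl + zv $ i - y') / 2"
      have e: "0 < e" using y yy by (simp add: e_def)
      have "eventually (\<lambda>m. zv $ i - e < ?b m) sequentially"
        using bc e by (intro order_tendstoD) auto
      moreover have "eventually (\<lambda>m. ?cl - e < Hm m $ i) sequentially"
        using e by (intro lower) simp
      ultimately have "eventually (\<lambda>m. y' < av m $ i) sequentially" using aeq
      proof eventually_elim
        case (elim m) then show ?case using e_def by (rule arith_lo)
      qed
      then show ?thesis using yy by simp
    next
      case PInf then show ?thesis using y by simp
    next
      case MInf then show ?thesis by simp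
    qed
  qed
  show "limsup (\<lambda>m. ereal (av m $ i)) \<le> ereal (?cu + zv $ i)"
  proof (unfold Limsup_le_iff, intro allI impI)
    fix y :: ereal assume y: "ereal (?cu + zv $ i) < y"
    show "eventually (\<lambda>m. ereal (av m $ i) < y) sequentially"
    proof (cases y)
      case (real y')
      note yy = this
      define e where "e = (y' - (?cu + zv $ i)) / 2"
      have e: "0 < e" using y yy by (simp add: e_def)
      have "eventually (\<lambda>m. ?b m < zv $ i + e) sequentially"
        using bc e by (intro order_tendstoD) auto
      moreover have "eventually (\<lambda>m. Hm m $ i < ?cu + e) sequentially"
        using e by (intro upper) simp
      ultimately have "eventually (\<lambda>m. av m $ i < y') sequentially" using aeq
      proof eventually_elim
        case (elim m) then show ?case using e_def by (rule arith_up)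
      qed
      then show ?thesis using yy by simp
    next
      case PInf then show ?thesis by simp
    next
      case MInf then show ?thesis using y by simp
    qed
  qed
qed

end

theorem lemma3p2:
  fixes M :: "'a measure"
    and W :: "real \<Rightarrow> 'a \<Rightarrow> real^'m"
    and A :: "real^'d^'d"
    and h :: "real \<Rightarrow> real^'d \<Rightarrow> real^'d"
    and \<sigma> :: "real \<Rightarrow> real^'m^'d"
    and \<phi> :: "real \<Rightarrow> real \<Rightarrow> 'a \<Rightarrow> real^'d \<Rightarrow> real^'d"
    and T t :: real
    and x :: "real^'d"
    and Z :: "'a \<Rightarrow> real^'d"
  assumes BM: "two_sided_BM M W"
    and T_pos: "T > 0"
    and A: "assumption_A A"
    and H1: "assumption_H1 h"
    and h_periodic: "\<And>s y. h (s + T) y = h s y"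
    and Sigma: "assumption_Sigma \<sigma>"
    and sigma_periodic: "\<And>s. \<sigma> (s + T) = \<sigma> s"
    and flow: "solution_flow M W A h \<sigma> \<phi>"
    and Z: "wiener_integral_inf M W (\<lambda>s. mexp ((t - s) *\<^sub>R A) ** \<sigma> s) t Z"
  shows "AE \<omega> in M. \<forall>i.
           ereal (K_op A (liminf_h h \<phi> T x) Z t \<omega> $ i) \<le> liminf_phi \<phi> T x t \<omega> i \<and>
           liminf_phi \<phi> T x t \<omega> i \<le> limsup_phi \<phi> T x t \<omega> i \<and>
           limsup_phi \<phi> T x t \<omega> i \<le> ereal (K_op A (limsup_h h \<phi> T x) Z t \<omega> $ i)"
proof -
  interpret prob_space M using BM unfolding two_sided_BM_def by blast
  note A' = A[unfolded assumption_A_def]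
  have off: "\<And>i j. i \<noteq> j \<Longrightarrow> 0 \<le> A $ i $ j" using conjunct1[OF A'] by blast
  obtain lam where lam: "lam < 0" and Phi0: "\<forall>\<tau>\<ge>0. mnorm (mexp (\<tau> *\<^sub>R A)) \<le> exp (lam * \<tau>)"
    using conjunct2[OF A'] by blast
  have Phi: "\<And>\<tau>. 0 \<le> \<tau> \<Longrightarrow> mnorm (mexp (\<tau> *\<^sub>R A)) \<le> exp (lam * \<tau>)" using Phi0 by blast
  have Pnn: "\<And>\<tau> k l. 0 \<le> \<tau> \<Longrightarrow> 0 \<le> mexp (\<tau> *\<^sub>R A) $ k $ l"
    by (rule mexp_nonneg[OF off])
  note H1' = H1[unfolded assumption_H1_def]
  obtain Dh where Dh: "\<forall>z. ((\<lambda>(t, y). h t y) has_derivative blinfun_apply (Dh z)) (at z)"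
    using conjunct1[OF H1'] by blast
  have hc: "continuous_on UNIV (\<lambda>(t, y). h t y)"
    by (rule continuous_at_imp_continuous_on) (use Dh has_derivative_continuous in blast)
  have hnn: "\<And>s y j. 0 \<le> h s y $ j"
    using conjunct1[OF conjunct2[OF conjunct2[OF H1']]] by (simp add: less_eq_vec_def)
  obtain Bh where Bh0: "\<forall>z\<in>range (\<lambda>(t, y). h t y). norm z \<le> Bh"
    using conjunct1[OF conjunct2[OF H1']] unfolding bounded_iff by blast
  have Bh: "\<And>s y. norm (h s y) \<le> Bh" using Bh0 by auto
  have hb: "\<And>s y j. h s y $ j \<le> Bh"
    by (rule order_trans[OF abs_ge_self order_trans[OF component_le_norm_cart Bh]])
  have sc: "\<And>i j. continuous_on UNIV (\<lambda>r. \<sigma> r $ i $ j)"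
    using Sigma unfolding assumption_Sigma_def by blast
  obtain Cs where sb: "\<And>r i j. \<bar>\<sigma> r $ i $ j\<bar> \<le> Cs"
    using Sigma unfolding assumption_Sigma_def by blast
  have fc: "\<And>s y \<omega>. \<omega> \<in> space M \<Longrightarrow> continuous_on {s..} (\<lambda>t. \<phi> t s \<omega> y)"
    using flow unfolding solution_flow_def by blast
  have fe: "\<And>s t y. s \<le> t \<Longrightarrow> \<exists>I. wiener_integral M W (\<lambda>r. mexp ((t - r) *\<^sub>R A) ** \<sigma> r) s t I \<and>
             (AE \<omega> in M. \<phi> t s \<omega> y =
                mexp ((t - s) *\<^sub>R A) *v y
                + integral {s..t} (\<lambda>r. mexp ((t - r) *\<^sub>R A) *v h r (\<phi> r s \<omega> y))
                + I \<omega>)"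
    using flow unfolding solution_flow_def by blast
  define EQ where "EQ = (\<lambda>m I \<omega>. \<phi> t (- (real m * T)) \<omega> x =
                mexp ((t - - (real m * T)) *\<^sub>R A) *v x
                + integral {- (real m * T)..t} (\<lambda>r. mexp ((t - r) *\<^sub>R A) *v h r (\<phi> r (- (real m * T)) \<omega> x))
                + I \<omega>)"
  have "\<forall>m. \<exists>I. - (real m * T) \<le> t \<longrightarrow> wiener_integral M W (\<lambda>r. mexp ((t - r) *\<^sub>R A) ** \<sigma> r) (- (real m * T)) t I \<and>
             (AE \<omega> in M. EQ m I \<omega>)"
  proof
    fix m
    show "\<exists>I. - (real m * T) \<le> t \<longrightarrow> wiener_integral M W (\<lambda>r. mexp ((t - r) *\<^sub>R A) ** \<sigma> r) (- (real m * T)) t I \<and>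
             (AE \<omega> in M. EQ m I \<omega>)"
    proof (cases "- (real m * T) \<le> t")
      case True
      then show ?thesis using fe[OF True, of x] unfolding EQ_def by blast
    next
      case False then show ?thesis by blast
    qed
  qed
  from choice[OF this] obtain J where Jall: "\<forall>m. - (real m * T) \<le> t \<longrightarrow> wiener_integral M W (\<lambda>r. mexp ((t - r) *\<^sub>R A) ** \<sigma> r) (- (real m * T)) t (J m) \<and>
             (AE \<omega> in M. EQ m (J m) \<omega>)" by blast
  have J: "\<And>m. - (real m * T) \<le> t \<Longrightarrow> wiener_integral M W (\<lambda>r. mexp ((t - r) *\<^sub>R A) ** \<sigma> r) (- (real m * T)) t (J m)"
    using Jall by blast
  have JE: "\<And>m. - (real m * T) \<le> t \<Longrightarrow> (AE \<omega> in M. EQ m (J m) \<omega>)"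
    using Jall by blast
  have AE1: "AE \<omega> in M. \<forall>m. - (real m * T) \<le> t \<longrightarrow> EQ m (J m) \<omega>"
    unfolding AE_all_countable
  proof
    fix m
    show "AE \<omega> in M. - (real m * T) \<le> t \<longrightarrow> EQ m (J m) \<omega>"
      by (cases "- (real m * T) \<le> t") (use JE in auto)
  qed
  have AE2: "AE \<omega> in M. (\<lambda>m. J m \<omega>) \<longlonglongrightarrow> Z \<omega>"
    by (rule as_conv[OF BM lam Phi sc sb T_pos J Z])
  from AE1 AE2 AE_space show ?thesis
  proof eventually_elim
    case (elim \<omega>)
    define \<psi> where "\<psi> = (\<lambda>m r. \<phi> r (- (real m * T)) \<omega> x)"
    have pc: "\<And>m. continuous_on {- (real m * T)..} (\<psi> m)"
      unfolding \<psi>_def using fc[OF elim(3)] by blast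
    have eqs: "\<And>m. - (real m * T) \<le> t \<Longrightarrow> \<phi> t (- (real m * T)) \<omega> x =
       mexp ((t - - (real m * T)) *\<^sub>R A) *v x + Hm A h \<psi> T t m + J m \<omega>"
      using elim(1) Hm_def[OF lam Phi Pnn hc hnn hb T_pos pc] unfolding EQ_def \<psi>_def by simp
    note DA1 = DA(1)[OF lam Phi Pnn hc hnn hb T_pos pc eqs elim(2)]
    note DA2 = DA(2)[OF lam Phi Pnn hc hnn hb T_pos pc eqs elim(2)]
    have ulo_eq: "(\<lambda>s. liminf_h h \<phi> T x s \<omega>) = ulo h \<psi>"
    proof (rule ext)
      fix s
      have UD: "ulo h \<psi> s = (\<chi> j. real_of_ereal (liminf (\<lambda>m. ereal (h s (\<psi> m s) $ j))))"
        using ulo_def[OF lam Phi Pnn hc hnn hb T_pos pc, of s] by simp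
      show "liminf_h h \<phi> T x s \<omega> = ulo h \<psi> s"
        unfolding UD unfolding liminf_h_def \<psi>_def ..
    qed
    have uup_eq: "(\<lambda>s. limsup_h h \<phi> T x s \<omega>) = uup h \<psi>"
    proof (rule ext)
      fix s
      have UD: "uup h \<psi> s = (\<chi> j. real_of_ereal (limsup (\<lambda>m. ereal (h s (\<psi> m s) $ j))))"
        using uup_def[OF lam Phi Pnn hc hnn hb T_pos pc, of s] by simp
      show "limsup_h h \<phi> T x s \<omega> = uup h \<psi> s"
        unfolding UD unfolding limsup_h_def \<psi>_def ..
    qed
    show ?case
    proof
      fix i
      have K1: "K_op A (liminf_h h \<phi> T x) Z t \<omega> $ i = (LINT r:{..t}|lborel. mexp ((t - r) *\<^sub>R A) *v ulo h \<psi> r) $ i + Z \<omega> $ i"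
        unfolding K_op_def using ulo_eq by (simp add: fun_eq_iff)
      have K2: "K_op A (limsup_h h \<phi> T x) Z t \<omega> $ i = (LINT r:{..t}|lborel. mexp ((t - r) *\<^sub>R A) *v uup h \<psi> r) $ i + Z \<omega> $ i"
        unfolding K_op_def using uup_eq by (simp add: fun_eq_iff)
      show "ereal (K_op A (liminf_h h \<phi> T x) Z t \<omega> $ i) \<le> liminf_phi \<phi> T x t \<omega> i \<and>
           liminf_phi \<phi> T x t \<omega> i \<le> limsup_phi \<phi> T x t \<omega> i \<and>
           limsup_phi \<phi> T x t \<omega> i \<le> ereal (K_op A (limsup_h h \<phi> T x) Z t \<omega> $ i)"
        unfolding K1 K2 liminf_phi_def limsup_phi_def
        using DA1[of i] DA2[of i] by (simp add: Liminf_le_Limsup)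
    qed
  qed
qed

end
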